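(* Assume the standing setting and the type II decomposition for a type II edge $e=uw$ ($u\in U$, $w\in W$). Then: (i) if $U_2\neq\emptyset$ then $u\in U_2$; otherwise $u\in U_4$ and $|W_2|=1$; (ii) if $W_1\neq\emptyset$ then $w\in W_1$; otherwise $w\in W_3$; (iii) if $U_4\neq\emptyset$ then $E_G(U_4)=\{e_1\}$; otherwise $E_G[U_1,U_2]=\{e_1\}$; (iv) if $W_3\neq\emptyset$ then $|U_1|=|W_1|+1$ and $E_G(W_3)=\{e_2\}$; otherwise $|U_1|=|W_1|$, $E_G[W_1,W_2]=\{e_2\}$ and $U_3=\emptyset$; (v) $|U_2\cup U_4|=|W_2\cup W_4|$.
   Context: Graphs may have multiple edges but no loops. An edge is admissible if it lies in some perfect matching; a connected graph with at least two vertices is matching covered if every edge is admissible; an edge $e$ of a matching covered graph $G$ is removable if $G-e$ is matching covered, and nonremovable otherwise. A brick is a 3-connected nonbipartite graph $G$ such that $G-x-y$ has a perfect matching for all distinct $x,y$. A nonbipartite matching covered graph $G$ is near-bipartite if it has a pair of edges $\{e_1,e_2\}$ (a removable doubleton) such that $G-\{e_1,e_2\}$ is bipartite matching covered. For a graph with a perfect matching, a nonempty vertex set $S$ is a barrier if the number of odd components of $G-S$ equals $|S|$. $E_G(X)$ is the set of edges with both ends in $X$ and $E_G[X,Y]$ the set of edges with one end in $X$ and the other in $Y$. Standing setting: $G$ is a near-bipartite brick with removable doubleton $\{e_1,e_2\}$, $H=G-\{e_1,e_2\}$, and $(U,W)$ is the bipartition of $H$, labelled so that both ends of $e_1$ lie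 in $U$ and both ends of $e_2$ lie in $W$. A nonremovable edge $e\notin\{e_1,e_2\}$ of $G$ is of type II if $e$ is nonremovable in $H$. Type II decomposition: let $e=uw$ be of type II with $u\in U$, $w\in W$. There is an edge $e^*$ of $G-e$ that is nonadmissible both in $G-e$ and in $H-e$; fix such $e^*$ and an inclusion-maximal barrier $B$ of $G-e$ containing both ends of $e^*$. Every component of $G-e-B$ with more than one vertex contains $e_1$ or $e_2$, so there are at most two such components; let $\omega\in\{0,1,2\}$ be their number. Let $U_1=B\cap U$, $W_2=B\cap W$, and let $U_2$ (resp. $W_1$) be the set of vertices of $U$ (resp. $W$) forming single-vertex components of $G-e-B$. Define subgraphs $G_1,G_2$: if $\omega=2$, $G_1$ is the nontrivial component containing $e_2$ and $G_2$ the one containing $e_1$; if $\omega=1$, the unique nontrivial component is $G_2$ (and $G_1$ is empty) when $|U_1|=|W_1|$, and is $G_1$ (and $G_2$ is empty) otherwise; if $\omega=0$ both are empty. Set $U_3=V(G_1)\cap U$, $W_3=V(G_1)\cap W$, $U_4=V(G_2)\cap U$, $W_4=V(G_2)\cap W$. *)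

theory Defs
  imports Main
begin

text \<open>Finite multigraphs without loops: a vertex set V, an edge set E (edges are
abstract objects, so parallel edges are allowed) and an incidence map ends assigning to
each edge its set of two distinct ends.\<close>

definition graph :: "'v set \<Rightarrow> 'e set \<Rightarrow> ('e \<Rightarrow> 'v set) \<Rightarrow> bool" where
  "graph V E ends \<longleftrightarrow> finite V \<and> finite E \<and> (\<forall>f\<in>E. ends f \<subseteq> V \<and> card (ends f) = 2)"

definition adj_rel :: "'v set \<Rightarrow> 'e set \<Rightarrow> ('e \<Rightarrow> 'v set) \<Rightarrow> ('v \<times> 'v) set" where
  "adj_rel V E ends = {(x, y). x \<in> V \<and> y \<in> V \<and> (\<exists>f\<in>E. ends f = {x, y})}"

definition connected_graph :: "'v set \<Rightarrow> 'e set \<Rightarrow> ('e \<Rightarrow> 'v set) \<Rightarrow> bool" where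
  "connected_graph V E ends \<longleftrightarrow> V \<noteq> {} \<and> (\<forall>x\<in>V. \<forall>y\<in>V. (x, y) \<in> (adj_rel V E ends)\<^sup>*)"

definition components :: "'v set \<Rightarrow> 'e set \<Rightarrow> ('e \<Rightarrow> 'v set) \<Rightarrow> 'v set set" where
  "components V E ends = (\<lambda>x. {y \<in> V. (x, y) \<in> (adj_rel V E ends)\<^sup>*}) ` V"

definition edges_avoiding :: "'e set \<Rightarrow> ('e \<Rightarrow> 'v set) \<Rightarrow> 'v set \<Rightarrow> 'e set" where
  "edges_avoiding E ends S = {f \<in> E. ends f \<inter> S = {}}"

definition perfect_matching :: "'v set \<Rightarrow> 'e set \<Rightarrow> ('e \<Rightarrow> 'v set) \<Rightarrow> 'e set \<Rightarrow> bool" where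
  "perfect_matching V E ends M \<longleftrightarrow> M \<subseteq> E \<and> (\<forall>v\<in>V. \<exists>!f. f \<in> M \<and> v \<in> ends f)"

definition has_pm :: "'v set \<Rightarrow> 'e set \<Rightarrow> ('e \<Rightarrow> 'v set) \<Rightarrow> bool" where
  "has_pm V E ends \<longleftrightarrow> (\<exists>M. perfect_matching V E ends M)"

definition admissible :: "'v set \<Rightarrow> 'e set \<Rightarrow> ('e \<Rightarrow> 'v set) \<Rightarrow> 'e \<Rightarrow> bool" where
  "admissible V E ends f \<longleftrightarrow> (\<exists>M. perfect_matching V E ends M \<and> f \<in> M)"

definition matching_covered :: "'v set \<Rightarrow> 'e set \<Rightarrow> ('e \<Rightarrow> 'v set) \<Rightarrow> bool" where
  "matching_covered V E ends \<longleftrightarrow> graph V E ends \<and> connected_graph V E ends \<and> card V \<ge> 2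
     \<and> (\<forall>f\<in>E. admissible V E ends f)"

definition removable :: "'v set \<Rightarrow> 'e set \<Rightarrow> ('e \<Rightarrow> 'v set) \<Rightarrow> 'e \<Rightarrow> bool" where
  "removable V E ends f \<longleftrightarrow> f \<in> E \<and> matching_covered V (E - {f}) ends"

definition bipartite :: "'v set \<Rightarrow> 'e set \<Rightarrow> ('e \<Rightarrow> 'v set) \<Rightarrow> bool" where
  "bipartite V E ends \<longleftrightarrow> (\<exists>A B. A \<union> B = V \<and> A \<inter> B = {} \<and>
      (\<forall>f\<in>E. \<exists>a\<in>A. \<exists>b\<in>B. ends f = {a, b}))"

definition three_connected :: "'v set \<Rightarrow> 'e set \<Rightarrow> ('e \<Rightarrow> 'v set) \<Rightarrow> bool" where
  "three_connected V E ends \<longleftrightarrow> card V \<ge> 4 \<and>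
     (\<forall>S. S \<subseteq> V \<and> card S < 3 \<longrightarrow> connected_graph (V - S) (edges_avoiding E ends S) ends)"

definition brick :: "'v set \<Rightarrow> 'e set \<Rightarrow> ('e \<Rightarrow> 'v set) \<Rightarrow> bool" where
  "brick V E ends \<longleftrightarrow> graph V E ends \<and> three_connected V E ends \<and> \<not> bipartite V E ends \<and>
     (\<forall>x\<in>V. \<forall>y\<in>V. x \<noteq> y \<longrightarrow> has_pm (V - {x, y}) (edges_avoiding E ends {x, y}) ends)"

definition removable_doubleton :: "'v set \<Rightarrow> 'e set \<Rightarrow> ('e \<Rightarrow> 'v set) \<Rightarrow> 'e \<Rightarrow> 'e \<Rightarrow> bool" where
  "removable_doubleton V E ends e1 e2 \<longleftrightarrow> e1 \<in> E \<and> e2 \<in> E \<and> e1 \<noteq> e2 \<and>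
     matching_covered V E ends \<and> \<not> bipartite V E ends \<and>
     bipartite V (E - {e1, e2}) ends \<and> matching_covered V (E - {e1, e2}) ends"

definition barrier :: "'v set \<Rightarrow> 'e set \<Rightarrow> ('e \<Rightarrow> 'v set) \<Rightarrow> 'v set \<Rightarrow> bool" where
  "barrier V E ends S \<longleftrightarrow> has_pm V E ends \<and> S \<noteq> {} \<and> S \<subseteq> V \<and>
     card {C \<in> components (V - S) (edges_avoiding E ends S) ends. odd (card C)} = card S"

definition edges_in :: "'e set \<Rightarrow> ('e \<Rightarrow> 'v set) \<Rightarrow> 'v set \<Rightarrow> 'e set" where
  "edges_in E ends X = {f \<in> E. ends f \<subseteq> X}"

definition edges_between :: "'e set \<Rightarrow> ('e \<Rightarrow> 'v set) \<Rightarrow> 'v set \<Rightarrow> 'v set \<Rightarrow> 'e set" where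
  "edges_between E ends X Y = {f \<in> E. \<exists>x\<in>X. \<exists>y\<in>Y. ends f = {x, y}}"

definition td_comps :: "'v set \<Rightarrow> 'e set \<Rightarrow> ('e \<Rightarrow> 'v set) \<Rightarrow> 'e \<Rightarrow> 'v set \<Rightarrow> 'v set set" where
  "td_comps V E ends e B = components (V - B) (edges_avoiding (E - {e}) ends B) ends"

definition td_NT :: "'v set \<Rightarrow> 'e set \<Rightarrow> ('e \<Rightarrow> 'v set) \<Rightarrow> 'e \<Rightarrow> 'v set \<Rightarrow> 'v set set" where
  "td_NT V E ends e B = {C \<in> td_comps V E ends e B. card C \<ge> 2}"

definition td_singles :: "'v set \<Rightarrow> 'e set \<Rightarrow> ('e \<Rightarrow> 'v set) \<Rightarrow> 'e \<Rightarrow> 'v set \<Rightarrow> 'v set \<Rightarrow> 'v set" where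
  "td_singles V E ends e B X = {v \<in> X. {v} \<in> td_comps V E ends e B}"

definition td_VG1 :: "'v set \<Rightarrow> 'e set \<Rightarrow> ('e \<Rightarrow> 'v set) \<Rightarrow> 'e \<Rightarrow> 'e \<Rightarrow> 'e \<Rightarrow> 'v set \<Rightarrow> 'v set \<Rightarrow> 'v set \<Rightarrow> 'v set" where
  "td_VG1 V E ends e e1 e2 U W B =
    (let NT = td_NT V E ends e B in
     if card NT = 2 then (THE C. C \<in> NT \<and> ends e2 \<subseteq> C)
     else if card NT = 1 then
       (if card (B \<inter> U) = card (td_singles V E ends e B W) then {} else (THE C. C \<in> NT))
     else {})"

definition td_VG2 :: "'v set \<Rightarrow> 'e set \<Rightarrow> ('e \<Rightarrow> 'v set) \<Rightarrow> 'e \<Rightarrow> 'e \<Rightarrow> 'e \<Rightarrow> 'v set \<Rightarrow> 'v set \<Rightarrow> 'v set \<Rightarrow> 'v set" where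
  "td_VG2 V E ends e e1 e2 U W B =
    (let NT = td_NT V E ends e B in
     if card NT = 2 then (THE C. C \<in> NT \<and> ends e1 \<subseteq> C)
     else if card NT = 1 then
       (if card (B \<inter> U) = card (td_singles V E ends e B W) then (THE C. C \<in> NT) else {})
     else {})"

end

theory Submission
  imports Defs
begin

definition cof :: "'v set \<Rightarrow> 'e set \<Rightarrow> ('e \<Rightarrow> 'v set) \<Rightarrow> 'v \<Rightarrow> 'v set" where
  "cof V E ends x = {y \<in> V. (x, y) \<in> (adj_rel V E ends)\<^sup>*}"

lemma components_cof: "components V E ends = cof V E ends ` V"
  unfolding components_def cof_def by simp

lemma adj_sym: "(x, y) \<in> adj_rel V E ends \<Longrightarrow> (y, x) \<in> adj_rel V E ends"
  unfolding adj_rel_def by (auto simp: insert_commute)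

lemma adj_V: "(x, y) \<in> adj_rel V E ends \<Longrightarrow> x \<in> V \<and> y \<in> V"
  unfolding adj_rel_def by auto

lemma rtr_sym: "(x, y) \<in> (adj_rel V E ends)\<^sup>* \<Longrightarrow> (y, x) \<in> (adj_rel V E ends)\<^sup>*"
proof (induction rule: rtrancl_induct)
  case base then show ?case by simp
next
  case (step y z)
  show ?case by (rule converse_rtrancl_into_rtrancl[OF adj_sym[OF step.hyps(2)] step.IH])
qed

lemma comp_sub: "C \<in> components V E ends \<Longrightarrow> C \<subseteq> V"
  unfolding components_def by auto

lemma cof_self: "x \<in> V \<Longrightarrow> x \<in> cof V E ends x"
  unfolding cof_def by auto

lemma comp_eq_cof: assumes "C \<in> components V E ends" "x \<in> C" shows "C = cof V E ends x"
proof -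
  obtain a where a: "a \<in> V" "C = cof V E ends a" using assms(1) by (auto simp: components_cof)
  have ax: "(a, x) \<in> (adj_rel V E ends)\<^sup>*" using a assms(2) by (auto simp: cof_def)
  have xa: "(x, a) \<in> (adj_rel V E ends)\<^sup>*" using rtr_sym[OF ax] .
  show ?thesis unfolding a(2) cof_def
  proof (intro set_eqI iffI)
    fix y assume "y \<in> {y \<in> V. (a, y) \<in> (adj_rel V E ends)\<^sup>*}"
    then show "y \<in> {y \<in> V. (x, y) \<in> (adj_rel V E ends)\<^sup>*}" using rtrancl_trans[OF xa] by blast
  next
    fix y assume "y \<in> {y \<in> V. (x, y) \<in> (adj_rel V E ends)\<^sup>*}"
    then show "y \<in> {y \<in> V. (a, y) \<in> (adj_rel V E ends)\<^sup>*}" using rtrancl_trans[OF ax] by blast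
  qed
qed

lemma comp_disj: "C1 \<in> components V E ends \<Longrightarrow> C2 \<in> components V E ends \<Longrightarrow> x \<in> C1 \<Longrightarrow> x \<in> C2 \<Longrightarrow> C1 = C2"
  by (metis comp_eq_cof)

lemma comp_closed: assumes "C \<in> components V E ends" "x \<in> C" "f \<in> E" "ends f = {x, y}" "y \<in> V"
  shows "y \<in> C"
proof -
  have C: "C = cof V E ends x" using comp_eq_cof assms by metis
  have "x \<in> V" using comp_sub assms by blast
  then have "(x, y) \<in> adj_rel V E ends" using assms unfolding adj_rel_def by auto
  then show ?thesis using C assms(5) unfolding cof_def by auto
qed

lemma comp_ex: assumes "x \<in> V" shows "\<exists>C\<in>components V E ends. x \<in> C"
proof
  show "cof V E ends x \<in> components V E ends" unfolding components_cof using assms by (rule imageI)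
  show "x \<in> cof V E ends x" using cof_self[OF assms] .
qed

lemma comps_finite: "finite V \<Longrightarrow> finite (components V E ends)"
  unfolding components_def by simp

lemma comp_finite: "finite V \<Longrightarrow> C \<in> components V E ends \<Longrightarrow> finite C"
  by (rule finite_subset[OF comp_sub])

lemma comp_ne: assumes "C \<in> components V E ends" shows "C \<noteq> {}"
proof -
  obtain x where "x \<in> V" "C = cof V E ends x" using assms unfolding components_cof by blast
  then show ?thesis using cof_self[of x V E ends] by auto
qed

lemma singleton_comp:
  assumes "x \<in> V" "\<forall>f\<in>E. \<forall>y. ends f = {x, y} \<longrightarrow> y \<notin> V"
  shows "{x} \<in> components V E ends"
proof -
  have "cof V E ends x = {x}"
  proof
    show "cof V E ends x \<subseteq> {x}"
    proof
      fix y assume "y \<in> cof V E ends x"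
      then have "(x, y) \<in> (adj_rel V E ends)\<^sup>*" by (auto simp: cof_def)
      then show "y \<in> {x}"
      proof (cases rule: converse_rtranclE)
        case base then show ?thesis by simp
      next
        case (step z)
        then show ?thesis using assms unfolding adj_rel_def by auto
      qed
    qed
  next
    show "{x} \<subseteq> cof V E ends x" using cof_self[OF assms(1)] by blast
  qed
  then have "{x} = cof V E ends x" by simp
  then show ?thesis unfolding components_cof using assms(1) by blast
qed

lemma ends2: assumes "card (ends f) = 2" "x \<in> ends f" shows "\<exists>y. y \<noteq> x \<and> ends f = {x, y}"
proof -
  obtain a b where ab: "a \<noteq> b" "ends f = {a, b}" using assms(1) card_2_iff by metis
  then show ?thesis using assms(2) by (auto simp: insert_commute)
qed

lemma pair_eq_left: "{x, y} = {x, z} \<Longrightarrow> y \<noteq> x \<Longrightarrow> y = z"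
  by (auto simp: doubleton_eq_iff)

definition mate :: "('e \<Rightarrow> 'v set) \<Rightarrow> 'e set \<Rightarrow> 'v \<Rightarrow> 'v" where
  "mate ends M v = (THE y. \<exists>f\<in>M. ends f = {v, y})"

lemma mate_unique:
  assumes pm: "perfect_matching V E ends M" and c2: "\<forall>f\<in>M. card (ends f) = 2"
    and v: "v \<in> V" and f: "f \<in> M" "ends f = {v, y}" and g: "g \<in> M" "ends g = {v, z}"
  shows "y = z"
proof -
  have "f = g" using pm v f g unfolding perfect_matching_def by auto
  moreover have "y \<noteq> v"
  proof -
    have c: "card (ends f) = 2" using c2 f(1) by blast
    show ?thesis using c f(2) by auto
  qed
  ultimately show ?thesis using f g pair_eq_left by metis
qed

lemma mate_props:
  assumes pm: "perfect_matching V E ends M" and c2: "\<forall>f\<in>M. card (ends f) = 2"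
    and v: "v \<in> V"
  shows "\<exists>f\<in>M. ends f = {v, mate ends M v}" "mate ends M v \<noteq> v"
proof -
  obtain f where f: "f \<in> M" "v \<in> ends f" using pm v unfolding perfect_matching_def by blast
  obtain y where y: "y \<noteq> v" "ends f = {v, y}" using ends2 c2 f by metis
  have "mate ends M v = y" unfolding mate_def
  proof (rule the_equality)
    show "\<exists>f\<in>M. ends f = {v, y}" using f y by blast
  next
    fix z assume "\<exists>f\<in>M. ends f = {v, z}"
    then show "z = y" using mate_unique[OF pm c2 v] f y by metis
  qed
  then show "\<exists>f\<in>M. ends f = {v, mate ends M v}" "mate ends M v \<noteq> v" using f y by auto
qed

lemma mate_eq:
  assumes pm: "perfect_matching V E ends M" and c2: "\<forall>f\<in>M. card (ends f) = 2"
    and v: "v \<in> V" and f: "f \<in> M" "ends f = {v, y}"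
  shows "mate ends M v = y"
  using mate_props(1)[OF pm c2 v] mate_unique[OF pm c2 v] f by metis

lemma mate_mate:
  assumes pm: "perfect_matching V E ends M" and c2: "\<forall>f\<in>M. card (ends f) = 2"
    and v: "v \<in> V" and sub: "\<forall>f\<in>M. ends f \<subseteq> V"
  shows "mate ends M (mate ends M v) = v" "mate ends M v \<in> V"
proof -
  obtain f where f: "f \<in> M" "ends f = {v, mate ends M v}" using mate_props[OF pm c2 v] by blast
  show mv: "mate ends M v \<in> V" using sub f by auto
  show "mate ends M (mate ends M v) = v"
  proof -
    have "ends f = {mate ends M v, v}" using f(2) by (metis insert_commute)
    from mate_eq[OF pm c2 mv f(1) this] show ?thesis .
  qed
qed


lemma graph_E: "graph V E ends \<Longrightarrow> f \<in> E \<Longrightarrow> ends f \<subseteq> V \<and> card (ends f) = 2"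
  unfolding graph_def by blast

lemma graph_sub: "graph V E ends \<Longrightarrow> E' \<subseteq> E \<Longrightarrow> graph V E' ends"
  unfolding graph_def by (meson finite_subset subsetD)

lemma brick_parts:
  assumes "brick V E ends"
  shows "graph V E ends" "three_connected V E ends"
    "\<And>x y. x \<in> V \<Longrightarrow> y \<in> V \<Longrightarrow> x \<noteq> y \<Longrightarrow> has_pm (V - {x, y}) (edges_avoiding E ends {x, y}) ends"
  using assms by (simp_all add: brick_def)

lemma two_elems: assumes "finite N" "card N \<ge> 2" shows "\<exists>x y. x \<in> N \<and> y \<in> N \<and> x \<noteq> y"
proof -
  have "N \<noteq> {}" using assms by (intro notI) simp
  then obtain x where x: "x \<in> N" by blast
  have "card (N - {x}) = card N - 1" using x assms(1) by (simp add: card_Diff_singleton)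
  then have "N - {x} \<noteq> {}" using assms(2) by (intro notI) simp
  then obtain y where "y \<in> N - {x}" by blast
  then show ?thesis using x by blast
qed

lemma deg3:
  assumes gr: "graph V E ends" and tc: "three_connected V E ends" and z: "z \<in> V"
    and N: "finite N" "card N \<le> 2" and nb: "\<forall>f\<in>E. z \<in> ends f \<longrightarrow> ends f \<subseteq> insert z N"
  shows False
proof -
  define S where "S = N \<inter> V - {z}"
  have fV: "finite V" using gr unfolding graph_def by blast
  have SV: "S \<subseteq> V" unfolding S_def by blast
  have "card S \<le> card N" by (rule card_mono[OF N(1)]) (auto simp: S_def)
  then have cS: "card S \<le> 2" using N(2) by linarith
  then have "card S < 3" by simp
  then have con: "connected_graph (V - S) (edges_avoiding E ends S) ends" using tc SV unfolding three_connected_def by blast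
  have c4: "card V \<ge> 4" using tc unfolding three_connected_def by blast
  have zS: "z \<in> V - S" using z unfolding S_def by blast
  have "card (V - S) \<ge> 2" using card_Diff_subset[OF finite_subset[OF SV fV] SV] c4 cS by linarith
  moreover have "card (V - S - {z}) = card (V - S) - 1" using zS fV by (simp add: card_Diff_singleton)
  ultimately have "card (V - S - {z}) \<ge> 1" by linarith
  then have "V - S - {z} \<noteq> {}" by (intro notI) simp
  then obtain t where t: "t \<in> V - S" "t \<noteq> z" by blast
  have "(z, t) \<in> (adj_rel (V - S) (edges_avoiding E ends S) ends)\<^sup>*" using con zS t(1) unfolding connected_graph_def by blast
  then show False
  proof (cases rule: converse_rtranclE)
    case base then show ?thesis using t by simp
  next
    case (step z')
    then obtain f where f: "f \<in> E" "ends f \<inter> S = {}" "ends f = {z, z'}" "z' \<in> V - S"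
      unfolding adj_rel_def edges_avoiding_def by blast
    have "card (ends f) = 2" using graph_E[OF gr f(1)] by blast
    then have "z' \<noteq> z" using f(3) by auto
    moreover have "z' \<in> insert z N" using nb f by blast
    ultimately have "z' \<in> S" using f(4) unfolding S_def by blast
    then show False using f(4) by blast
  qed
qed

lemma bicrit_count:
  assumes br: "brick V E ends" and Z: "Z \<subseteq> V" "Z \<noteq> {}" and NV: "N \<subseteq> V" and ZN: "Z \<inter> N = {}"
    and nb: "\<forall>f\<in>E. \<forall>z\<in>Z. z \<in> ends f \<longrightarrow> ends f \<subseteq> insert z N"
  shows "card Z + 2 \<le> card N"
proof -
  have gr: "graph V E ends" using brick_parts(1)[OF br] .
  have fV: "finite V" using gr unfolding graph_def by blast
  have fN: "finite N" using finite_subset[OF NV fV] .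
  have fZ: "finite Z" using finite_subset[OF Z(1) fV] .
  obtain z0 where z0: "z0 \<in> Z" using Z by blast
  have "card N \<ge> 3"
  proof (rule ccontr)
    assume "\<not> card N \<ge> 3"
    then have "card N \<le> 2" by simp
    have tc: "three_connected V E ends" using brick_parts(2)[OF br] .
    have z0V: "z0 \<in> V" using z0 Z(1) by blast
    have nb0: "\<forall>f\<in>E. z0 \<in> ends f \<longrightarrow> ends f \<subseteq> insert z0 N" using nb z0 by blast
    show False by (rule deg3[OF gr tc z0V fN \<open>card N \<le> 2\<close> nb0])
  qed
  then have "card N \<ge> 2" by simp
  then obtain x y where xy: "x \<in> N" "y \<in> N" "x \<noteq> y"
    using two_elems[OF fN] by blast
  have "has_pm (V - {x, y}) (edges_avoiding E ends {x, y}) ends"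
    using brick_parts(3)[OF br] xy NV by blast
  then obtain P where P: "perfect_matching (V - {x, y}) (edges_avoiding E ends {x, y}) ends P"
    unfolding has_pm_def by blast
  have PE: "P \<subseteq> E" using P unfolding perfect_matching_def edges_avoiding_def by blast
  have c2: "\<forall>f\<in>P. card (ends f) = 2" using PE graph_E[OF gr] by blast
  have sub: "\<forall>f\<in>P. ends f \<subseteq> V - {x, y}"
  proof
    fix f assume f: "f \<in> P"
    then have "f \<in> edges_avoiding E ends {x, y}" using P unfolding perfect_matching_def by blast
    then have "f \<in> E" "ends f \<inter> {x, y} = {}" unfolding edges_avoiding_def by auto
    then show "ends f \<subseteq> V - {x, y}" using graph_E[OF gr] by blast
  qed
  define m where "m = mate ends P"
  have ZV': "Z \<subseteq> V - {x, y}" using Z(1) ZN xy by blast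
  have mN: "m z \<in> N - {x, y}" if "z \<in> Z" for z
  proof -
    have zV: "z \<in> V - {x, y}" using ZV' that by blast
    obtain f where f: "f \<in> P" "ends f = {z, m z}" using mate_props(1)[OF P c2 zV] unfolding m_def by blast
    have "m z \<noteq> z" using mate_props(2)[OF P c2 zV] unfolding m_def by blast
    moreover have "ends f \<subseteq> insert z N"
    proof -
      have "f \<in> E" using PE f(1) by blast
      moreover have "z \<in> ends f" using f(2) by simp
      ultimately show ?thesis using nb that by blast
    qed
    moreover have "m z \<in> V - {x, y}" using sub f by blast
    ultimately show ?thesis using f by blast
  qed
  have inj: "inj_on m Z"
  proof (rule inj_onI)
    fix z1 z2 assume z: "z1 \<in> Z" "z2 \<in> Z" "m z1 = m z2"
    have z1V: "z1 \<in> V - {x, y}" using ZV' z by blast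
    have z2V: "z2 \<in> V - {x, y}" using ZV' z by blast
    have e1: "mate ends P (m z1) = z1" using mate_mate(1)[OF P c2 z1V sub] unfolding m_def .
    have e2: "mate ends P (m z2) = z2" using mate_mate(1)[OF P c2 z2V sub] unfolding m_def .
    have "z1 = mate ends P (m z1)" using e1 by simp
    also have "\<dots> = mate ends P (m z2)" using z(3) by simp
    also have "\<dots> = z2" using e2 .
    finally show "z1 = z2" .
  qed
  have "card Z = card (m ` Z)" using card_image[OF inj] by simp
  also have "\<dots> \<le> card (N - {x, y})" using mN fN by (intro card_mono) auto
  also have "\<dots> = card N - 2" using xy fN by (simp add: card_Diff_subset)
  finally show ?thesis using \<open>card N \<ge> 3\<close> by linarith
qed

lemma even_invol:
  assumes "finite K" "\<forall>v\<in>K. g v \<in> K \<and> g v \<noteq> v \<and> g (g v) = v"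
  shows "even (card K)"
  using assms
proof (induction "card K" arbitrary: K rule: less_induct)
  case less
  show ?case
  proof (cases "K = {}")
    case True then show ?thesis by simp
  next
    case False
    then obtain v where v: "v \<in> K" by blast
    define K' where "K' = K - {v, g v}"
    have gv: "g v \<in> K" "g v \<noteq> v" using less.prems v by auto
    have c2: "card {v, g v} = 2" using gv by simp
    have "card {v, g v} \<le> card K" by (rule card_mono) (use less.prems(1) v gv in auto)
    moreover have "card K' = card K - card {v, g v}" unfolding K'_def using less.prems(1) v gv
      by (intro card_Diff_subset) auto
    ultimately have cK: "card K = card K' + 2" using c2 by linarith
    have "\<forall>x\<in>K'. g x \<in> K' \<and> g x \<noteq> x \<and> g (g x) = x"
    proof
      fix x assume x: "x \<in> K'"
      then have xK: "x \<in> K" "x \<noteq> v" "x \<noteq> g v" unfolding K'_def by auto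
      have p: "g x \<in> K" "g x \<noteq> x" "g (g x) = x" using less.prems(2) xK(1) by auto
      have "g x \<noteq> v" using p(3) xK(3) by auto
      moreover have "g x \<noteq> g v" using p(3) xK(2) less.prems(2) v by metis
      ultimately show "g x \<in> K' \<and> g x \<noteq> x \<and> g (g x) = x" using p unfolding K'_def by auto
    qed
    moreover have "finite K'" unfolding K'_def using less.prems(1) by simp
    moreover have "card K' < card K" using cK by simp
    ultimately have "even (card K')" using less.hyps by blast
    then show ?thesis using cK by simp
  qed
qed

lemma odd_comp_out:
  assumes gr: "graph V E ends" and pm: "perfect_matching V E ends M" and S: "S \<subseteq> V"
    and C: "C \<in> components (V - S) (edges_avoiding E ends S) ends" and od: "odd (card C)"
  shows "\<exists>v\<in>C. mate ends M v \<in> S"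
proof (rule ccontr)
  assume nn: "\<not> (\<exists>v\<in>C. mate ends M v \<in> S)"
  have ME: "M \<subseteq> E" using pm unfolding perfect_matching_def by blast
  have c2: "\<forall>f\<in>M. card (ends f) = 2" using ME graph_E[OF gr] by blast
  have sub: "\<forall>f\<in>M. ends f \<subseteq> V" using ME graph_E[OF gr] by blast
  have CV: "C \<subseteq> V - S" using comp_sub[OF C] .
  have fV: "finite V" using gr unfolding graph_def by blast
  have "\<forall>v\<in>C. mate ends M v \<in> C \<and> mate ends M v \<noteq> v \<and> mate ends M (mate ends M v) = v"
  proof
    fix v assume v: "v \<in> C"
    have vV: "v \<in> V" using CV v by blast
    obtain f where f: "f \<in> M" "ends f = {v, mate ends M v}" using mate_props(1)[OF pm c2 vV] by blast
    have mV: "mate ends M v \<in> V" using mate_mate(2)[OF pm c2 vV sub] .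
    have mS: "mate ends M v \<notin> S" using nn v by blast
    have "f \<in> edges_avoiding E ends S" using f ME CV v mS unfolding edges_avoiding_def by auto
    then have "mate ends M v \<in> C" using comp_closed[OF C v _ f(2)] mV mS by blast
    then show "mate ends M v \<in> C \<and> mate ends M v \<noteq> v \<and> mate ends M (mate ends M v) = v"
      using mate_props(2)[OF pm c2 vV] mate_mate(1)[OF pm c2 vV sub] by blast
  qed
  then have "even (card C)" using even_invol[of C] comp_finite[OF _ C] fV by blast
  then show False using od by simp
qed

lemma tutte_easy:
  assumes gr: "graph V E ends" and pm: "perfect_matching V E ends M" and S: "S \<subseteq> V"
  shows "card {C \<in> components (V - S) (edges_avoiding E ends S) ends. odd (card C)} \<le> card S"
proof -
  define OC where "OC = {C \<in> components (V - S) (edges_avoiding E ends S) ends. odd (card C)}"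
  have ME: "M \<subseteq> E" using pm unfolding perfect_matching_def by blast
  have c2: "\<forall>f\<in>M. card (ends f) = 2" using ME graph_E[OF gr] by blast
  have sub: "\<forall>f\<in>M. ends f \<subseteq> V" using ME graph_E[OF gr] by blast
  have fV: "finite V" using gr unfolding graph_def by blast
  define g where "g C = (SOME s. s \<in> S \<and> (\<exists>v\<in>C. mate ends M v = s))" for C
  have g: "g C \<in> S \<and> (\<exists>v\<in>C. mate ends M v = g C)" if "C \<in> OC" for C
  proof -
    have "\<exists>s. s \<in> S \<and> (\<exists>v\<in>C. mate ends M v = s)" using odd_comp_out[OF gr pm S, of C] that
      unfolding OC_def by blast
    then show ?thesis unfolding g_def by (rule someI_ex)
  qed
  have "inj_on g OC"
  proof (rule inj_onI)
    fix C1 C2 assume c: "C1 \<in> OC" "C2 \<in> OC" "g C1 = g C2"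
    obtain v1 where v1: "v1 \<in> C1" "mate ends M v1 = g C1" using g[OF c(1)] by blast
    obtain v2 where v2: "v2 \<in> C2" "mate ends M v2 = g C2" using g[OF c(2)] by blast
    have C1: "C1 \<in> components (V - S) (edges_avoiding E ends S) ends" using c unfolding OC_def by blast
    have C2: "C2 \<in> components (V - S) (edges_avoiding E ends S) ends" using c unfolding OC_def by blast
    have v1V: "v1 \<in> V" using comp_sub[OF C1] v1 by blast
    have v2V: "v2 \<in> V" using comp_sub[OF C2] v2 by blast
    have "v1 = mate ends M (mate ends M v1)" using mate_mate(1)[OF pm c2 v1V sub] by simp
    also have "\<dots> = mate ends M (mate ends M v2)" using v1(2) v2(2) c(3) by simp
    also have "\<dots> = v2" using mate_mate(1)[OF pm c2 v2V sub] by simp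
    finally have "v1 = v2" .
    then show "C1 = C2" using comp_disj[OF C1 C2] v1 v2 by blast
  qed
  moreover have "g ` OC \<subseteq> S" using g by blast
  moreover have "finite S" using finite_subset[OF S fV] .
  ultimately have "card OC \<le> card S" using card_inj_on_le by blast
  then show ?thesis unfolding OC_def .
qed


lemma adj_mono: "V2 \<subseteq> V1 \<Longrightarrow> E2 \<subseteq> E1 \<Longrightarrow> adj_rel V2 E2 ends \<subseteq> adj_rel V1 E1 ends"
  unfolding adj_rel_def by blast

lemma avoid_mono: "S \<subseteq> S' \<Longrightarrow> edges_avoiding E ends S' \<subseteq> edges_avoiding E ends S"
  unfolding edges_avoiding_def by blast

lemma comp_lift:
  assumes SS: "S \<subseteq> S'" and L: "L \<in> components (V - S) (edges_avoiding E ends S) ends"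
    and LS: "L \<inter> S' = {}"
  shows "L \<in> components (V - S') (edges_avoiding E ends S') ends"
proof -
  define R1 where "R1 = adj_rel (V - S) (edges_avoiding E ends S) ends"
  define R2 where "R2 = adj_rel (V - S') (edges_avoiding E ends S') ends"
  obtain x where x: "x \<in> L" using comp_ne[OF L] by blast
  have Lx: "L = cof (V - S) (edges_avoiding E ends S) ends x" using comp_eq_cof[OF L x] .
  have LV: "L \<subseteq> V - S" using comp_sub[OF L] .
  have xV: "x \<in> V - S'" using x LV LS by blast
  have R21: "R2 \<subseteq> R1" unfolding R1_def R2_def using SS by (intro adj_mono avoid_mono) auto
  have "cof (V - S') (edges_avoiding E ends S') ends x = L"
  proof
    show "cof (V - S') (edges_avoiding E ends S') ends x \<subseteq> L"
    proof
      fix y assume "y \<in> cof (V - S') (edges_avoiding E ends S') ends x"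
      then have y: "y \<in> V - S'" "(x, y) \<in> R2\<^sup>*" unfolding cof_def R2_def by auto
      have "(x, y) \<in> R1\<^sup>*" using rtrancl_mono[OF R21] y(2) by blast
      then show "y \<in> L" using Lx y(1) SS unfolding cof_def R1_def by auto
    qed
  next
    have key: "(x, y) \<in> R1\<^sup>* \<Longrightarrow> (x, y) \<in> R2\<^sup>*" for y
    proof (induction rule: rtrancl_induct)
      case base then show ?case by simp
    next
      case (step y z)
      have yz: "y \<in> V - S" "z \<in> V - S" using step.hyps(2) adj_V unfolding R1_def by metis+
      have "(x, z) \<in> R1\<^sup>*" using step.hyps by (rule rtrancl_into_rtrancl)
      then have zL: "z \<in> L" using Lx yz(2) unfolding cof_def R1_def by auto
      have yL: "y \<in> L" using Lx yz(1) step.hyps(1) unfolding cof_def R1_def by auto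
      obtain f where f: "f \<in> edges_avoiding E ends S" "ends f = {y, z}"
        using step.hyps(2) unfolding R1_def adj_rel_def by blast
      have "f \<in> edges_avoiding E ends S'" using f yL zL LS unfolding edges_avoiding_def by auto
      moreover have "y \<in> V - S'" "z \<in> V - S'" using yL zL LV LS by auto
      ultimately have "(y, z) \<in> R2" using f(2) unfolding R2_def adj_rel_def by blast
      then show ?case using step.IH by (rule rtrancl_into_rtrancl[rotated])
    qed
    show "L \<subseteq> cof (V - S') (edges_avoiding E ends S') ends x"
    proof
      fix y assume yL: "y \<in> L"
      then have "(x, y) \<in> R1\<^sup>*" using Lx unfolding cof_def R1_def by auto
      then have "(x, y) \<in> R2\<^sup>*" by (rule key)
      then show "y \<in> cof (V - S') (edges_avoiding E ends S') ends x"
        using yL LV LS unfolding cof_def R2_def by auto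
    qed
  qed
  then show ?thesis unfolding components_cof using xV by (metis imageI)
qed

lemma barrier_extend:
  assumes gr: "graph V E ends" and bar: "barrier V E ends B"
    and K: "K \<in> components (V - B) (edges_avoiding E ends B) ends" and YK: "Y \<subseteq> K"
    and iso: "\<forall>x\<in>K - Y. \<forall>f\<in>E. x \<in> ends f \<longrightarrow> ends f \<inter> (B \<union> Y) \<noteq> {}"
    and cnt: "card Y + (if odd (card K) then 1 else 0) \<le> card (K - Y)"
  shows "barrier V E ends (B \<union> Y)"
proof -
  define S' where "S' = B \<union> Y"
  define CS where "CS = components (V - B) (edges_avoiding E ends B) ends"
  define CS' where "CS' = components (V - S') (edges_avoiding E ends S') ends"
  define OC where "OC = {C \<in> CS. odd (card C)}"
  define OC' where "OC' = {C \<in> CS'. odd (card C)}"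
  have fV: "finite V" using gr unfolding graph_def by blast
  have hp: "has_pm V E ends" and Bne: "B \<noteq> {}" and BV: "B \<subseteq> V" and cB: "card OC = card B"
    using bar unfolding barrier_def OC_def CS_def by auto
  obtain M where M: "perfect_matching V E ends M" using hp unfolding has_pm_def by blast
  have KV: "K \<subseteq> V - B" using comp_sub[OF K] .
  have S'V: "S' \<subseteq> V" unfolding S'_def using BV YK KV by blast
  have le: "card OC' \<le> card S'" using tutte_easy[OF gr M S'V] unfolding OC'_def CS'_def .
  define A1 where "A1 = OC - {K}"
  define A2 where "A2 = (\<lambda>x. {x}) ` (K - Y)"
  have A1: "A1 \<subseteq> OC'"
  proof
    fix L assume L: "L \<in> A1"
    then have LCS: "L \<in> CS" "odd (card L)" "L \<noteq> K" unfolding A1_def OC_def by auto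
    have "L \<inter> K = {}"
    proof (rule ccontr)
      assume "L \<inter> K \<noteq> {}"
      then obtain z where "z \<in> L" "z \<in> K" by blast
      then have "L = K" using comp_disj[OF _ K] LCS(1) unfolding CS_def by blast
      then show False using LCS(3) by blast
    qed
    moreover have "L \<inter> B = {}" using comp_sub[of L] LCS unfolding CS_def by blast
    ultimately have "L \<inter> S' = {}" unfolding S'_def using YK by blast
    then have "L \<in> CS'" using comp_lift[of B S' L V E ends] LCS(1) unfolding CS_def CS'_def S'_def by blast
    then show "L \<in> OC'" using LCS unfolding OC'_def by blast
  qed
  have A2: "A2 \<subseteq> OC'"
  proof
    fix C assume "C \<in> A2"
    then obtain x where x: "x \<in> K - Y" "C = {x}" unfolding A2_def by blast
    have xV: "x \<in> V - S'" using x KV unfolding S'_def by blast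
    have "\<forall>f\<in>edges_avoiding E ends S'. \<forall>y. ends f = {x, y} \<longrightarrow> y \<notin> V - S'"
    proof (intro ballI allI impI)
      fix f y assume f: "f \<in> edges_avoiding E ends S'" "ends f = {x, y}"
      then have "f \<in> E" "ends f \<inter> S' = {}" unfolding edges_avoiding_def by auto
      moreover have "x \<in> ends f" using f(2) by simp
      ultimately show "y \<notin> V - S'" using iso x(1) unfolding S'_def by blast
    qed
    then have "{x} \<in> CS'" using singleton_comp[OF xV] unfolding CS'_def by blast
    then show "C \<in> OC'" using x unfolding OC'_def by simp
  qed
  have disj: "A1 \<inter> A2 = {}"
  proof (rule ccontr)
    assume "A1 \<inter> A2 \<noteq> {}"
    then obtain x where x: "{x} \<in> A1" "x \<in> K - Y" unfolding A2_def by blast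
    then have "{x} \<in> CS" "{x} \<noteq> K" unfolding A1_def OC_def by auto
    moreover have "x \<in> K" using x by blast
    ultimately have "{x} = K" using comp_disj[OF _ K, of "{x}" x] unfolding CS_def by blast
    then show False using \<open>{x} \<noteq> K\<close> by blast
  qed
  have fCS': "finite CS'" unfolding CS'_def using comps_finite fV by blast
  have fOC': "finite OC'" using fCS' unfolding OC'_def by simp
  have fCS: "finite CS" unfolding CS_def using comps_finite fV by blast
  have fOC: "finite OC" using fCS unfolding OC_def by simp
  have fK: "finite K" using finite_subset[OF KV] fV by blast
  have cA2: "card A2 = card (K - Y)" unfolding A2_def by (rule card_image) (simp add: inj_on_def)
  have cA1: "card A1 + (if odd (card K) then 1 else 0) = card OC"
  proof (cases "odd (card K)")
    case True
    then have "K \<in> OC" using K unfolding OC_def CS_def by blast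
    then have KO: "K \<in> OC" .
    have "card (OC - {K}) = card OC - 1" using KO by (rule card_Diff_singleton)
    moreover have "card OC > 0" using KO fOC card_gt_0_iff by blast
    ultimately show ?thesis unfolding A1_def using True by simp
  next
    case False
    then have "K \<notin> OC" unfolding OC_def by blast
    then show ?thesis unfolding A1_def using False by simp
  qed
  have cS': "card S' = card B + card Y"
  proof -
    have "B \<inter> Y = {}" using YK KV by blast
    moreover have "finite B" "finite Y" using finite_subset[OF BV fV] finite_subset[OF YK fK] by auto
    ultimately show ?thesis unfolding S'_def by (simp add: card_Un_disjoint)
  qed
  have "card (A1 \<union> A2) = card A1 + card A2"
    using disj finite_subset[OF A1 fOC'] finite_subset[OF A2 fOC'] by (simp add: card_Un_disjoint)
  moreover have "card (A1 \<union> A2) \<le> card OC'" using A1 A2 fOC' by (intro card_mono) auto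
  ultimately have ge: "card OC' \<ge> card S'" using cA1 cA2 cB cS' cnt by linarith
  have "S' \<noteq> {}" unfolding S'_def using Bne by blast
  then show ?thesis using hp S'V le ge unfolding barrier_def OC'_def CS'_def S'_def by simp
qed



locale ctx =
  fixes V :: "'v set" and E :: "'e set" and ends :: "'e \<Rightarrow> 'v set"
    and e1 e2 e estar :: 'e and U W B :: "'v set" and u w :: 'v
  assumes brick: "brick V E ends"
    and Hmc: "matching_covered V (E - {e1, e2}) ends"
    and e1E: "e1 \<in> E" and e2E: "e2 \<in> E"
    and UW: "U \<union> W = V" "U \<inter> W = {}"
    and bip: "\<forall>f\<in>E - {e1, e2}. \<exists>x\<in>U. \<exists>y\<in>W. ends f = {x, y}"
    and e1_U: "ends e1 \<subseteq> U" and e2_W: "ends e2 \<subseteq> W"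
    and eE: "e \<in> E" "e \<notin> {e1, e2}"
    and e_ends: "ends e = {u, w}" and u_U: "u \<in> U" and w_W: "w \<in> W"
    and estar_edge: "estar \<in> E - {e, e1, e2}"
    and bar: "barrier V (E - {e}) ends B" and B_estar: "ends estar \<subseteq> B"
    and B_max: "\<forall>B'. barrier V (E - {e}) ends B' \<and> ends estar \<subseteq> B' \<and> B \<subseteq> B' \<longrightarrow> B' = B"
begin

abbreviation "CS \<equiv> components (V - B) (edges_avoiding (E - {e}) ends B) ends"
abbreviation "uh K \<equiv> card (K \<inter> U) = card (K \<inter> W) + 1"
abbreviation "U2 \<equiv> {v \<in> U. {v} \<in> CS}"

lemma swap: "ctx V E ends e2 e1 e estar W U B w u"
proof -
  have s1: "{e2, e1} = {e1, e2}" by (rule insert_commute)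
  have s2: "{e, e2, e1} = {e, e1, e2}" by blast
  have bip': "\<forall>f\<in>E - {e2, e1}. \<exists>x\<in>W. \<exists>y\<in>U. ends f = {x, y}"
  proof
    fix f assume "f \<in> E - {e2, e1}"
    then have "f \<in> E - {e1, e2}" using s1 by simp
    then obtain x y where "x \<in> U" "y \<in> W" "ends f = {x, y}" using bip by blast
    then have "ends f = {y, x}" by (simp add: insert_commute)
    then show "\<exists>x\<in>W. \<exists>y\<in>U. ends f = {x, y}" using \<open>x \<in> U\<close> \<open>y \<in> W\<close> by blast
  qed
  show ?thesis
    apply (rule ctx.intro)
    using brick apply blast
    using Hmc s1 apply simp
    using e2E apply blast
    using e1E apply blast
    using UW apply blast
    using UW apply blast
    using bip' apply blast
    using e2_W apply blast
    using e1_U apply blast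
    using eE apply blast
    using eE apply blast
    using e_ends apply (simp add: insert_commute)
    using w_W apply blast
    using u_U apply blast
    using estar_edge s2 apply simp
    using bar apply blast
    using B_estar apply blast
    using B_max apply blast
    done
qed

lemma gr: "graph V E ends" using brick_parts(1)[OF brick] .
lemma fV: "finite V" using gr unfolding graph_def by blast
lemma grE': "graph V (E - {e}) ends" by (rule graph_sub[OF gr]) blast
lemma endsE: "f \<in> E \<Longrightarrow> ends f \<subseteq> V" "f \<in> E \<Longrightarrow> card (ends f) = 2"
  using graph_E[OF gr] by blast+

lemma BV: "B \<subseteq> V" using bar unfolding barrier_def by blast
lemma hpG': "has_pm V (E - {e}) ends" using bar unfolding barrier_def by blast
lemma cOC: "card {C \<in> CS. odd (card C)} = card B" using bar unfolding barrier_def by blast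

lemma e1_ne: "e1 \<noteq> e" and e2_ne: "e2 \<noteq> e" using eE by auto

lemma comp_subVB: "K \<in> CS \<Longrightarrow> K \<subseteq> V - B" by (rule comp_sub)

lemma cl: assumes K: "K \<in> CS" and x: "x \<in> K" and f: "f \<in> E - {e}" "ends f = {x, y}" and y: "y \<notin> B"
  shows "y \<in> K"
proof -
  have yV: "y \<in> V" using endsE(1)[of f] f by auto
  have "x \<notin> B" using comp_subVB[OF K] x by blast
  then have "f \<in> edges_avoiding (E - {e}) ends B" using f y unfolding edges_avoiding_def by auto
  have yVB: "y \<in> V - B" using yV y by blast
  show ?thesis using comp_closed[OF K x _ f(2) yVB] \<open>f \<in> edges_avoiding (E - {e}) ends B\<close> by blast
qed

lemma Hedge: assumes "f \<in> E" "f \<noteq> e1" "f \<noteq> e2" shows "\<exists>x\<in>U. \<exists>y\<in>W. ends f = {x, y}"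
  using bip assms by blast

lemma estar_ends: "\<exists>x0 y0. x0 \<in> U \<and> y0 \<in> W \<and> x0 \<in> B \<and> y0 \<in> B \<and> ends estar = {x0, y0}"
proof -
  have "estar \<in> E - {e1, e2}" using estar_edge by blast
  then obtain x0 y0 where xy: "x0 \<in> U" "y0 \<in> W" "ends estar = {x0, y0}" using bip by blast
  then have "x0 \<in> B" "y0 \<in> B" using B_estar by auto
  then show ?thesis using xy by blast
qed

lemma W2ne: "B \<inter> W \<noteq> {}" and U1ne: "B \<inter> U \<noteq> {}" using estar_ends by blast+

lemma e1_card: "card (ends e1) = 2" using endsE(2)[OF e1E] .
lemma e2_card: "card (ends e2) = 2" using endsE(2)[OF e2E] .

lemma V_UW: "x \<in> V \<Longrightarrow> x \<in> U \<or> x \<in> W" using UW by blast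
lemma notUW: "x \<in> U \<Longrightarrow> x \<in> W \<Longrightarrow> False" using UW by blast

lemma u_other_edge: "\<exists>f\<in>E - {e1, e2} - {e}. u \<in> ends f"
proof (rule ccontr)
  assume nn: "\<not> ?thesis"
  define N where "N = insert w (if u \<in> ends e1 then ends e1 - {u} else {})"
  have fe1: "finite (ends e1)" using e1_card by (intro card_ge_0_finite) simp
  define X where "X = (if u \<in> ends e1 then ends e1 - {u} else {})"
  have fX: "finite X" unfolding X_def using fe1 by simp
  have fN: "finite N" unfolding N_def X_def[symmetric] using fX by simp
  have "card X \<le> 1" unfolding X_def using e1_card by simp
  moreover have "card N \<le> Suc (card X)" unfolding N_def X_def[symmetric] using fX by (simp add: card_insert_if)
  ultimately have c2: "card N \<le> 2" by linarith
  have nb: "\<forall>f\<in>E. u \<in> ends f \<longrightarrow> ends f \<subseteq> insert u N"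
  proof (intro ballI impI)
    fix f assume f: "f \<in> E" "u \<in> ends f"
    show "ends f \<subseteq> insert u N"
    proof (cases "f = e")
      case True then show ?thesis using e_ends unfolding N_def by auto
    next
      case False
      show ?thesis
      proof (cases "f = e1")
        case True then show ?thesis using f unfolding N_def by auto
      next
        case False2: False
        show ?thesis
        proof (cases "f = e2")
          case True then have "u \<in> W" using f e2_W by blast
          then show ?thesis using u_U notUW by blast
        next
          case False
          then show ?thesis using nn f False2 \<open>f \<noteq> e\<close> by blast
        qed
      qed
    qed
  qed
  have uV: "u \<in> V" using u_U UW by blast
  show False by (rule deg3[OF gr brick_parts(2)[OF brick] uV fN c2 nb])
qed

lemma M0_ex: "\<exists>M. perfect_matching V (E - {e1, e2} - {e}) ends M"
proof -
  obtain f where f: "f \<in> E - {e1, e2} - {e}" "u \<in> ends f" using u_other_edge by blast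
  have "admissible V (E - {e1, e2}) ends f" using Hmc f unfolding matching_covered_def by blast
  then obtain P where P: "perfect_matching V (E - {e1, e2}) ends P" "f \<in> P" unfolding admissible_def by blast
  have uV: "u \<in> V" using u_U UW by blast
  have "e \<notin> P"
  proof
    assume "e \<in> P"
    moreover have "u \<in> ends e" using e_ends by simp
    ultimately have "e = f" using P f uV unfolding perfect_matching_def by blast
    then show False using f by blast
  qed
  then have "perfect_matching V (E - {e1, e2} - {e}) ends P" using P unfolding perfect_matching_def by blast
  then show ?thesis by blast
qed

definition "M0 = (SOME M. perfect_matching V (E - {e1, e2} - {e}) ends M)"
definition "q = mate ends M0"

lemma M0_pm: "perfect_matching V (E - {e1, e2} - {e}) ends M0"
  unfolding M0_def using M0_ex by (rule someI_ex)

lemma M0_pm': "perfect_matching V (E - {e}) ends M0"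
  using M0_pm unfolding perfect_matching_def by blast

lemma M0_sub: "M0 \<subseteq> E - {e1, e2} - {e}" using M0_pm unfolding perfect_matching_def by blast

lemma M0_c2: "\<forall>f\<in>M0. card (ends f) = 2" using M0_sub endsE by blast
lemma M0_V: "\<forall>f\<in>M0. ends f \<subseteq> V" using M0_sub endsE by blast

lemma q_props:
  assumes v: "v \<in> V"
  shows "q v \<in> V" "q v \<noteq> v" "q (q v) = v" "\<exists>f\<in>E - {e1, e2} - {e}. ends f = {v, q v}"
    "v \<in> U \<Longrightarrow> q v \<in> W" "v \<in> W \<Longrightarrow> q v \<in> U"
proof -
  show "q v \<in> V" "q (q v) = v" using mate_mate[OF M0_pm M0_c2 v M0_V] unfolding q_def by auto
  show "q v \<noteq> v" using mate_props(2)[OF M0_pm M0_c2 v] unfolding q_def .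
  obtain f where f: "f \<in> M0" "ends f = {v, q v}" using mate_props(1)[OF M0_pm M0_c2 v] unfolding q_def by blast
  then show "\<exists>f\<in>E - {e1, e2} - {e}. ends f = {v, q v}" using M0_sub by blast
  obtain x y where xy: "x \<in> U" "y \<in> W" "ends f = {x, y}" using bip f M0_sub by blast
  have d: "(v = x \<and> q v = y) \<or> (v = y \<and> q v = x)" using xy(3) f(2) by (simp add: doubleton_eq_iff)
  show "v \<in> U \<Longrightarrow> q v \<in> W" using d xy(1,2) UW(2) by blast
  show "v \<in> W \<Longrightarrow> q v \<in> U" using d xy(1,2) UW(2) by blast
qed

definition "out K = {v \<in> K. q v \<in> B}"

lemma q_in_comp: assumes K: "K \<in> CS" and v: "v \<in> K" and qv: "q v \<notin> B" shows "q v \<in> K"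
proof -
  have vV: "v \<in> V" using comp_subVB[OF K] v by blast
  obtain f where f: "f \<in> E - {e1, e2} - {e}" "ends f = {v, q v}" using q_props(4)[OF vV] by blast
  show ?thesis using cl[OF K v _ f(2) qv] f(1) by blast
qed

lemma odd_out: assumes K: "K \<in> CS" "odd (card K)" shows "out K \<noteq> {}"
proof -
  have "\<exists>v\<in>K. mate ends M0 v \<in> B" using odd_comp_out[OF grE' M0_pm' BV K] .
  then show ?thesis unfolding out_def q_def by blast
qed

end


context ctx begin

lemma out_sub: "out K \<subseteq> K" unfolding out_def by blast

lemma out_disj: assumes "K1 \<in> CS" "K2 \<in> CS" "K1 \<noteq> K2" shows "out K1 \<inter> out K2 = {}"
proof (rule ccontr)
  assume "out K1 \<inter> out K2 \<noteq> {}"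
  then obtain x where "x \<in> K1" "x \<in> K2" unfolding out_def by blast
  then have "K1 = K2" using comp_disj[OF assms(1) assms(2)] by blast
  then show False using assms(3) by blast
qed

definition "T = {v \<in> V - B. q v \<in> B}"

lemma fCS: "finite CS" using comps_finite fV by blast
lemma fK: "K \<in> CS \<Longrightarrow> finite K" using comp_finite[of "V - B"] fV by blast
lemma fB: "finite B" using finite_subset[OF BV fV] .

lemma T_eq: "T = \<Union> (out ` CS)"
proof
  show "T \<subseteq> \<Union> (out ` CS)"
  proof
    fix v assume v: "v \<in> T"
    then have "v \<in> V - B" unfolding T_def by blast
    then have "\<exists>K\<in>CS. v \<in> K" by (rule comp_ex)
    then obtain K where K: "K \<in> CS" "v \<in> K" by blast
    then have "v \<in> out K" using v unfolding out_def T_def by blast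
    then show "v \<in> \<Union> (out ` CS)" using K by blast
  qed
next
  show "\<Union> (out ` CS) \<subseteq> T"
  proof
    fix v assume "v \<in> \<Union> (out ` CS)"
    then obtain K where K: "K \<in> CS" "v \<in> out K" by blast
    then have "v \<in> V - B" using comp_subVB[OF K(1)] out_sub[of K] by blast
    then show "v \<in> T" using K unfolding T_def out_def by blast
  qed
qed

lemma T_sub: "T \<subseteq> q ` B"
proof
  fix v assume v: "v \<in> T"
  then have "v \<in> V" "q v \<in> B" unfolding T_def by auto
  then have "v = q (q v)" using q_props(3) by simp
  then show "v \<in> q ` B" using \<open>q v \<in> B\<close> by blast
qed

lemma inj_qB: "inj_on q B"
proof (rule inj_onI)
  fix x y assume "x \<in> B" "y \<in> B" "q x = q y"
  then have "x \<in> V" "y \<in> V" using BV by auto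
  then show "x = y" using q_props(3) \<open>q x = q y\<close> by metis
qed

lemma card_qB: "card (q ` B) = card B" using card_image[OF inj_qB] .

lemma sumT: "card T = (\<Sum>K\<in>CS. card (out K))"
proof -
  have "card (\<Union> (out ` CS)) = (\<Sum>K\<in>CS. card (out K))"
  proof (rule card_UN_disjoint)
    show "finite CS" by (rule fCS)
    show "\<forall>K\<in>CS. finite (out K)" using finite_subset[OF out_sub fK] by blast
    show "\<forall>K1\<in>CS. \<forall>K2\<in>CS. K1 \<noteq> K2 \<longrightarrow> out K1 \<inter> out K2 = {}" using out_disj by blast
  qed
  then show ?thesis using T_eq by simp
qed

abbreviation "OC \<equiv> {C \<in> CS. odd (card C)}"

lemma sum_facts: "card T = card B" "(\<Sum>K\<in>CS - OC. card (out K)) = 0"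
  "(\<Sum>K\<in>OC. card (out K)) = (\<Sum>K\<in>OC. 1)"
proof -
  have fOC: "finite OC" using fCS by simp
  have "card T \<le> card (q ` B)" by (rule card_mono) (use finite_imageI[OF fB] T_sub in auto)
  then have t1: "card T \<le> card B" using card_qB by simp
  have ge: "\<And>K. K \<in> OC \<Longrightarrow> 1 \<le> card (out K)"
  proof -
    fix K assume "K \<in> OC"
    then have "out K \<noteq> {}" using odd_out by blast
    moreover have "finite (out K)" using \<open>K \<in> OC\<close> finite_subset[OF out_sub fK] by blast
    ultimately show "1 \<le> card (out K)" by (simp add: Suc_le_eq card_gt_0_iff)
  qed
  have s1: "(\<Sum>K\<in>OC. (1::nat)) \<le> (\<Sum>K\<in>OC. card (out K))" by (rule sum_mono) (rule ge)
  have s2: "(\<Sum>K\<in>OC. (1::nat)) = card B" using cOC by simp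
  have split: "(\<Sum>K\<in>CS. card (out K)) = (\<Sum>K\<in>CS - OC. card (out K)) + (\<Sum>K\<in>OC. card (out K))"
    by (rule sum.subset_diff) (auto simp: fCS)
  show "card T = card B" using t1 s1 s2 split sumT by linarith
  show "(\<Sum>K\<in>CS - OC. card (out K)) = 0" using t1 s1 s2 split sumT by linarith
  show "(\<Sum>K\<in>OC. card (out K)) = (\<Sum>K\<in>OC. 1)" using t1 s1 s2 split sumT by linarith
qed

lemma even_out: assumes "K \<in> CS" "even (card K)" shows "out K = {}"
proof -
  have "K \<in> CS - OC" using assms by blast
  moreover have "finite (CS - OC)" using fCS by simp
  ultimately have "card (out K) = 0" using sum_facts(2) by simp
  moreover have "finite (out K)" using finite_subset[OF out_sub fK[OF assms(1)]] .
  ultimately show ?thesis by simp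
qed

lemma odd_out1: assumes "K \<in> CS" "odd (card K)" shows "\<exists>v. out K = {v}"
proof -
  have KO: "K \<in> OC" using assms by blast
  have fOC: "finite OC" using fCS by simp
  have ge: "\<And>K. K \<in> OC \<Longrightarrow> 1 \<le> card (out K)"
  proof -
    fix K assume "K \<in> OC"
    then have "out K \<noteq> {}" using odd_out by blast
    moreover have "finite (out K)" using \<open>K \<in> OC\<close> finite_subset[OF out_sub fK] by blast
    ultimately show "1 \<le> card (out K)" by (simp add: Suc_le_eq card_gt_0_iff)
  qed
  have "(1::nat) = card (out K)" using sum_mono_inv[OF sum_facts(3)[symmetric] ge KO fOC] by simp
  then show ?thesis by (metis card_1_singletonE)
qed

lemma qB: assumes "b \<in> B" shows "q b \<notin> B"
proof -
  have "T = q ` B" by (rule card_subset_eq[OF finite_imageI[OF fB] T_sub]) (simp add: sum_facts(1) card_qB)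
  then have "q b \<in> T" using assms by blast
  then show ?thesis unfolding T_def by blast
qed


lemma KUW: assumes "K \<in> CS" shows "card K = card (K \<inter> U) + card (K \<inter> W)"
proof -
  have "K \<subseteq> V" using comp_subVB[OF assms] by blast
  then have "K = (K \<inter> U) \<union> (K \<inter> W)" using UW by blast
  moreover have "(K \<inter> U) \<inter> (K \<inter> W) = {}" using UW by blast
  moreover have "finite (K \<inter> U)" "finite (K \<inter> W)" using fK[OF assms] by auto
  ultimately show ?thesis by (metis card_Un_disjoint)
qed

lemma delta: assumes K: "K \<in> CS"
  shows "card (K \<inter> U) + card (out K \<inter> W) = card (K \<inter> W) + card (out K \<inter> U)"
proof -
  define A where "A = K \<inter> U - out K"
  define A' where "A' = K \<inter> W - out K"
  have KV: "K \<subseteq> V - B" using comp_subVB[OF K] .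
  have fKK: "finite K" using fK[OF K] .
  have "bij_betw q A A'"
  proof (rule bij_betw_byWitness[where f' = q])
    show "\<forall>a\<in>A. q (q a) = a" unfolding A_def using KV q_props(3) by blast
    show "\<forall>a\<in>A'. q (q a) = a" unfolding A'_def using KV q_props(3) by blast
    show "q ` A \<subseteq> A'"
    proof
      fix y assume "y \<in> q ` A"
      then obtain v where v: "v \<in> K" "v \<in> U" "q v \<notin> B" "y = q v" unfolding A_def out_def by blast
      have vV: "v \<in> V" using KV v(1) by blast
      have "q v \<in> K" using q_in_comp[OF K v(1) v(3)] .
      moreover have "q v \<in> W" using q_props(5)[OF vV v(2)] .
      moreover have "q (q v) \<notin> B" using q_props(3)[OF vV] KV v(1) by auto
      ultimately show "y \<in> A'" unfolding A'_def out_def using v(4) by blast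
    qed
    show "q ` A' \<subseteq> A"
    proof
      fix y assume "y \<in> q ` A'"
      then obtain v where v: "v \<in> K" "v \<in> W" "q v \<notin> B" "y = q v" unfolding A'_def out_def by blast
      have vV: "v \<in> V" using KV v(1) by blast
      have "q v \<in> K" using q_in_comp[OF K v(1) v(3)] .
      moreover have "q v \<in> U" using q_props(6)[OF vV v(2)] .
      moreover have "q (q v) \<notin> B" using q_props(3)[OF vV] KV v(1) by auto
      ultimately show "y \<in> A" unfolding A_def out_def using v(4) by blast
    qed
  qed
  then have cA: "card A = card A'" by (rule bij_betw_same_card)
  have u1: "card (K \<inter> U) = card A + card (out K \<inter> U)"
  proof -
    have "K \<inter> U = A \<union> (out K \<inter> U)" unfolding A_def using out_sub[of K] by blast
    moreover have "A \<inter> (out K \<inter> U) = {}" unfolding A_def by blast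
    moreover have "finite A" "finite (out K \<inter> U)" unfolding A_def using fKK finite_subset[OF out_sub fKK] by auto
    ultimately show ?thesis by (metis card_Un_disjoint)
  qed
  have w1: "card (K \<inter> W) = card A' + card (out K \<inter> W)"
  proof -
    have "K \<inter> W = A' \<union> (out K \<inter> W)" unfolding A'_def using out_sub[of K] by blast
    moreover have "A' \<inter> (out K \<inter> W) = {}" unfolding A'_def by blast
    moreover have "finite A'" "finite (out K \<inter> W)" unfolding A'_def using fKK finite_subset[OF out_sub fKK] by auto
    ultimately show ?thesis by (metis card_Un_disjoint)
  qed
  show ?thesis using cA u1 w1 by linarith
qed

lemma even_bal: assumes "K \<in> CS" "even (card K)" shows "card (K \<inter> U) = card (K \<inter> W)"
  using delta[OF assms(1)] even_out[OF assms] by simp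

lemma odd_cls: assumes K: "K \<in> CS" and od: "odd (card K)"
  shows "\<exists>v. out K = {v} \<and> v \<in> K \<and> (v \<in> U \<longrightarrow> uh K) \<and> (v \<in> W \<longrightarrow> card (K \<inter> W) = card (K \<inter> U) + 1)"
proof -
  obtain v where v: "out K = {v}" using odd_out1[OF K od] by blast
  have vK: "v \<in> K" using v out_sub[of K] by blast
  have d: "card (K \<inter> U) + card (out K \<inter> W) = card (K \<inter> W) + card (out K \<inter> U)" using delta[OF K] .
  have "v \<in> U \<longrightarrow> uh K"
  proof
    assume "v \<in> U"
    then have "out K \<inter> U = {v}" "out K \<inter> W = {}" using v UW(2) by auto
    then show "uh K" using d by simp
  qed
  moreover have "v \<in> W \<longrightarrow> card (K \<inter> W) = card (K \<inter> U) + 1"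
  proof
    assume "v \<in> W"
    then have "out K \<inter> W = {v}" "out K \<inter> U = {}" using v UW(2) by auto
    then show "card (K \<inter> W) = card (K \<inter> U) + 1" using d by simp
  qed
  ultimately show ?thesis using v vK by blast
qed

lemma uh_out: assumes K: "K \<in> CS" and uh: "uh K" shows "\<exists>v. out K = {v} \<and> v \<in> U"
proof -
  have "odd (card K)" using KUW[OF K] uh by simp
  then obtain v where v: "out K = {v}" "v \<in> K" "v \<in> W \<longrightarrow> card (K \<inter> W) = card (K \<inter> U) + 1"
    using odd_cls[OF K] by blast
  have "v \<in> V" using v(2) comp_subVB[OF K] by blast
  then have "v \<in> U \<or> v \<in> W" using UW by blast
  moreover have "v \<notin> W" using v(3) uh by auto
  ultimately show ?thesis using v(1) by blast
qed

lemma out_U_uh: assumes K: "K \<in> CS" and v: "v \<in> out K" "v \<in> U" shows "uh K"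
proof -
  have "odd (card K)"
  proof (rule ccontr)
    assume "\<not> odd (card K)"
    then have "out K = {}" using even_out[OF K] by simp
    then show False using v by blast
  qed
  then obtain v' where v': "out K = {v'}" "v' \<in> U \<longrightarrow> uh K" using odd_cls[OF K] by blast
  then show ?thesis using v by auto
qed

definition "hf y = cof (V - B) (edges_avoiding (E - {e}) ends B) ends (q y)"

lemma hf_props: assumes y: "y \<in> B" "y \<in> W"
  shows "hf y \<in> CS" "q y \<in> hf y" "uh (hf y)" "out (hf y) = {q y}" "q y \<in> U"
proof -
  have yV: "y \<in> V" using y BV by blast
  have qV: "q y \<in> V - B" using q_props(1)[OF yV] qB[OF y(1)] by blast
  show K: "hf y \<in> CS" unfolding hf_def components_cof using qV by (rule imageI)
  show qK: "q y \<in> hf y" unfolding hf_def by (rule cof_self[OF qV])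
  have "q (q y) = y" using q_props(3)[OF yV] .
  then have qo: "q y \<in> out (hf y)" unfolding out_def using qK y(1) by simp
  show qU: "q y \<in> U" using q_props(6)[OF yV y(2)] .
  show uh: "uh (hf y)" using out_U_uh[OF K qo qU] .
  obtain v where "out (hf y) = {v}" using uh_out[OF K uh] by blast
  then show "out (hf y) = {q y}" using qo by auto
qed

lemma card_UHC: "card {K \<in> CS. uh K} = card (B \<inter> W)"
proof -
  have inj: "inj_on hf (B \<inter> W)"
  proof (rule inj_onI)
    fix y1 y2 assume y: "y1 \<in> B \<inter> W" "y2 \<in> B \<inter> W" "hf y1 = hf y2"
    have "{q y1} = {q y2}" using hf_props(4)[of y1] hf_props(4)[of y2] y by auto
    then have "q y1 = q y2" by simp
    moreover have "y1 \<in> V" "y2 \<in> V" using y BV by auto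
    ultimately show "y1 = y2" using q_props(3) by metis
  qed
  have "hf ` (B \<inter> W) = {K \<in> CS. uh K}"
  proof
    show "hf ` (B \<inter> W) \<subseteq> {K \<in> CS. uh K}" using hf_props(1,3) by blast
    show "{K \<in> CS. uh K} \<subseteq> hf ` (B \<inter> W)"
    proof
      fix K assume K: "K \<in> {K \<in> CS. uh K}"
      then obtain v where v: "out K = {v}" "v \<in> U" using uh_out by blast
      have vK: "v \<in> K" using v(1) out_sub[of K] by blast
      have vV: "v \<in> V" using vK comp_subVB K by blast
      have qvB: "q v \<in> B" using v(1) unfolding out_def by blast
      have qvW: "q v \<in> W" using q_props(5)[OF vV v(2)] .
      have "hf (q v) = cof (V - B) (edges_avoiding (E - {e}) ends B) ends v"
        unfolding hf_def using q_props(3)[OF vV] by simp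
      also have "\<dots> = K" using comp_eq_cof[of K _ _ _ v] K vK by blast
      finally show "K \<in> hf ` (B \<inter> W)" using qvB qvW by (metis IntI imageI)
    qed
  qed
  then show ?thesis using card_image[OF inj] by simp
qed


lemma u_in_uh: "\<exists>K\<in>CS. uh K \<and> u \<in> K"
proof (rule ccontr)
  assume nu: "\<not> (\<exists>K\<in>CS. uh K \<and> u \<in> K)"
  define X where "X = {v. \<exists>K\<in>CS. uh K \<and> v \<in> K \<and> v \<in> U}"
  define XW where "XW = {v. \<exists>K\<in>CS. uh K \<and> v \<in> K \<and> v \<in> W} \<union> (B \<inter> W)"
  have XV: "X \<subseteq> V - B" unfolding X_def using comp_subVB by blast
  have XWV: "XW \<subseteq> V" unfolding XW_def using comp_subVB BV by blast
  have fXW: "finite XW" using finite_subset[OF XWV fV] .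
  have fX: "finite X" using finite_subset[OF XV] fV by blast
  have injq: "inj_on q X"
  proof (rule inj_onI)
    fix a b assume "a \<in> X" "b \<in> X" "q a = q b"
    then show "a = b" using XV q_props(3) by (metis Diff_iff subsetD)
  qed
  have qX: "q ` X = XW"
  proof
    show "q ` X \<subseteq> XW"
    proof
      fix y assume "y \<in> q ` X"
      then obtain v K where v: "K \<in> CS" "uh K" "v \<in> K" "v \<in> U" "y = q v" unfolding X_def by blast
      have vV: "v \<in> V" using v comp_subVB by blast
      have qW: "q v \<in> W" using q_props(5)[OF vV v(4)] .
      show "y \<in> XW"
      proof (cases "q v \<in> B")
        case True then show ?thesis unfolding XW_def using qW v(5) by blast
      next
        case False
        then have "q v \<in> K" using q_in_comp[OF v(1) v(3)] by blast
        then show ?thesis unfolding XW_def using qW v by blast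
      qed
    qed
    show "XW \<subseteq> q ` X"
    proof
      fix y assume y: "y \<in> XW"
      show "y \<in> q ` X"
      proof (cases "y \<in> B \<inter> W")
        case True
        then have "q y \<in> X" unfolding X_def using hf_props[of y] by blast
        moreover have "y = q (q y)" using q_props(3) True BV by auto
        ultimately show ?thesis by blast
      next
        case False
        then obtain K where K: "K \<in> CS" "uh K" "y \<in> K" "y \<in> W" using y unfolding XW_def by blast
        have yV: "y \<in> V" using K comp_subVB by blast
        obtain v0 where v0: "out K = {v0}" "v0 \<in> U" using uh_out[OF K(1,2)] by blast
        have "y \<notin> out K" using v0 K(4) UW(2) by auto
        then have "q y \<notin> B" unfolding out_def using K(3) by blast
        then have "q y \<in> K" using q_in_comp[OF K(1,3)] by blast
        moreover have "q y \<in> U" using q_props(6)[OF yV K(4)] .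
        ultimately have "q y \<in> X" unfolding X_def using K by blast
        moreover have "y = q (q y)" using q_props(3)[OF yV] by simp
        ultimately show ?thesis by blast
      qed
    qed
  qed
  have cX: "card X = card XW" using card_image[OF injq] qX by simp
  have "estar \<in> E - {e1, e2}" using estar_edge by blast
  then have "admissible V (E - {e1, e2}) ends estar" using Hmc unfolding matching_covered_def by blast
  then obtain P where P: "perfect_matching V (E - {e1, e2}) ends P" "estar \<in> P"
    unfolding admissible_def by blast
  have PE: "P \<subseteq> E - {e1, e2}" using P unfolding perfect_matching_def by blast
  have c2: "\<forall>f\<in>P. card (ends f) = 2" using PE endsE by blast
  have sub: "\<forall>f\<in>P. ends f \<subseteq> V" using PE endsE by blast
  define p where "p = mate ends P"
  have pX: "p ` X \<subseteq> XW"
  proof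
    fix y assume "y \<in> p ` X"
    then obtain v K where v: "K \<in> CS" "uh K" "v \<in> K" "v \<in> U" "y = p v" unfolding X_def by blast
    have vV: "v \<in> V" using v comp_subVB by blast
    obtain f where f: "f \<in> P" "ends f = {v, p v}" using mate_props(1)[OF P(1) c2 vV] unfolding p_def by blast
    obtain a b where ab: "a \<in> U" "b \<in> W" "ends f = {a, b}" using bip PE f(1) by blast
    have d: "(v = a \<and> p v = b) \<or> (v = b \<and> p v = a)" using ab(3) f(2) by (simp add: doubleton_eq_iff)
    have pW: "p v \<in> W" using d ab(1,2) v(4) UW(2) by blast
    have "f \<noteq> e"
    proof
      assume "f = e"
      then have "{v, p v} = {u, w}" using f(2) e_ends by simp
      then have "(v = u \<and> p v = w) \<or> (v = w \<and> p v = u)" by (simp add: doubleton_eq_iff)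
      then show False using nu v w_W UW(2) by blast
    qed
    then have fE: "f \<in> E - {e}" using PE f(1) by blast
    show "y \<in> XW"
    proof (cases "p v \<in> B")
      case True then show ?thesis unfolding XW_def using pW v(5) by blast
    next
      case False
      then have "p v \<in> K" using cl[OF v(1) v(3) fE f(2)] by blast
      then show ?thesis unfolding XW_def using pW v by blast
    qed
  qed
  have injp: "inj_on p X"
  proof (rule inj_onI)
    fix a b assume ab: "a \<in> X" "b \<in> X" "p a = p b"
    have aV: "a \<in> V" "b \<in> V" using ab XV by auto
    have "a = p (p a)" using mate_mate(1)[OF P(1) c2 aV(1) sub] unfolding p_def by simp
    also have "\<dots> = p (p b)" using ab(3) by simp
    also have "\<dots> = b" using mate_mate(1)[OF P(1) c2 aV(2) sub] unfolding p_def by simp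
    finally show "a = b" .
  qed
  have "card (p ` X) = card XW" using card_image[OF injp] cX by simp
  then have pXe: "p ` X = XW" using card_subset_eq[OF fXW pX] by blast
  obtain x0 y0 where xy: "x0 \<in> U" "y0 \<in> W" "x0 \<in> B" "y0 \<in> B" "ends estar = {x0, y0}"
    using estar_ends by blast
  have "y0 \<in> XW" unfolding XW_def using xy by blast
  then obtain v where v: "v \<in> X" "y0 = p v" using pXe by blast
  have y0V: "y0 \<in> V" using xy BV by blast
  have "ends estar = {y0, x0}" using xy(5) by (simp add: insert_commute)
  then have py0: "p y0 = x0" using mate_eq[OF P(1) c2 y0V P(2)] unfolding p_def by simp
  have vV: "v \<in> V" using v XV by blast
  have "v = p (p v)" using mate_mate(1)[OF P(1) c2 vV sub] unfolding p_def by simp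
  then have "v = x0" using v(2) py0 by simp
  then show False using v(1) XV xy(3) by blast
qed

lemma max_U: assumes K: "K \<in> CS" and c2: "card K \<ge> 2"
  and h: "uh K \<or> card (K \<inter> U) = card (K \<inter> W)" and ne1: "\<not> ends e1 \<subseteq> K"
  shows False
proof -
  define Y where "Y = K \<inter> W"
  have KV: "K \<subseteq> V - B" using comp_subVB[OF K] .
  have YK: "Y \<subseteq> K" unfolding Y_def by blast
  have KY: "K - Y = K \<inter> U" unfolding Y_def using KV UW by blast
  have iso: "\<forall>x\<in>K - Y. \<forall>f\<in>E - {e}. x \<in> ends f \<longrightarrow> ends f \<inter> (B \<union> Y) \<noteq> {}"
  proof (intro ballI impI)
    fix x f assume x: "x \<in> K - Y" and f: "f \<in> E - {e}" "x \<in> ends f"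
    have xU: "x \<in> U" "x \<in> K" using x KY by auto
    have cf: "card (ends f) = 2" using endsE(2)[of f] f(1) by blast
    obtain y where y: "y \<noteq> x" "ends f = {x, y}" using ends2[of ends f x, OF cf f(2)] by blast
    show "ends f \<inter> (B \<union> Y) \<noteq> {}"
    proof (cases "y \<in> B")
      case True then show ?thesis using y(2) by blast
    next
      case False
      then have yK: "y \<in> K" using cl[OF K xU(2) f(1) y(2)] by blast
      have "f \<noteq> e1"
      proof
        assume "f = e1"
        then have "ends e1 \<subseteq> K" using y(2) xU(2) yK by auto
        then show False using ne1 by blast
      qed
      moreover have "f \<noteq> e2" using f(2) e2_W xU(1) UW(2) by blast
      ultimately obtain a b where ab: "a \<in> U" "b \<in> W" "ends f = {a, b}" using Hedge f(1) by blast
      have "(x = a \<and> y = b) \<or> (x = b \<and> y = a)" using ab(3) y(2) by (simp add: doubleton_eq_iff)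
      then have "y \<in> W" using ab(1,2) xU(1) UW(2) by blast
      then have "y \<in> Y" unfolding Y_def using yK by blast
      then show ?thesis using y(2) by blast
    qed
  qed
  have cK: "card K = card (K \<inter> U) + card (K \<inter> W)" using KUW[OF K] .
  have cnt: "card Y + (if odd (card K) then 1 else 0) \<le> card (K - Y)"
  proof -
    have "card (K - Y) = card (K \<inter> U)" using KY by simp
    moreover have "card Y = card (K \<inter> W)" unfolding Y_def by simp
    ultimately show ?thesis using h cK by auto
  qed
  have "barrier V (E - {e}) ends (B \<union> Y)"
    by (rule barrier_extend[OF grE' bar K YK iso cnt])
  moreover have "ends estar \<subseteq> B \<union> Y" using B_estar by blast
  ultimately have "B \<union> Y = B" using B_max by blast
  then have "Y = {}" using YK KV by blast
  then have "card (K \<inter> W) = 0" unfolding Y_def by simp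
  then show False using h cK c2 by auto
qed


lemma U2_nb: assumes z: "z \<in> U2" and f: "f \<in> E" "f \<noteq> e" "f \<noteq> e1" "f \<noteq> e2" "z \<in> ends f"
  shows "\<exists>b. b \<in> B \<and> b \<in> W \<and> ends f = {z, b}"
proof -
  obtain a b where ab: "a \<in> U" "b \<in> W" "ends f = {a, b}" using Hedge f(1,3,4) by blast
  have zU: "z \<in> U" using z by blast
  have "z = a" using ab f(5) zU UW(2) by blast
  then have zb: "ends f = {z, b}" using ab(3) by simp
  have bB: "b \<in> B"
  proof (rule ccontr)
    assume "b \<notin> B"
    have zC: "{z} \<in> CS" using z by blast
    have "b \<in> {z}" using cl[OF zC _ _ zb \<open>b \<notin> B\<close>] f(1,2) by blast
    then show False using zU ab(2) UW(2) by blast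
  qed
  show ?thesis using bB ab(2) zb by blast
qed

lemma singleton_uh: assumes "K \<in> CS" "uh K" "card K = 1" shows "\<exists>z\<in>U2. K = {z}"
proof -
  obtain z where z: "K = {z}" using assms(3) card_1_singletonE by blast
  have "z \<in> U"
  proof (rule ccontr)
    assume "z \<notin> U"
    then have "K \<inter> U = {}" using z by blast
    then show False using assms(2) by simp
  qed
  then show ?thesis using z assms(1) by blast
qed

lemma U2_uh: assumes "z \<in> U2" shows "{z} \<in> CS" "uh {z}"
proof -
  show "{z} \<in> CS" using assms by blast
  have "{z} \<inter> U = {z}" "{z} \<inter> W = {}" using assms UW(2) by auto
  then show "uh {z}" by simp
qed

lemma U2V: "U2 \<subseteq> V" using UW by blast

lemma C_U: assumes allS: "\<forall>K\<in>CS. uh K \<longrightarrow> card K = 1" shows "\<exists>z\<in>U2. z \<in> ends e1"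
proof (rule ccontr)
  assume nz: "\<not> (\<exists>z\<in>U2. z \<in> ends e1)"
  have eq: "{K \<in> CS. uh K} = (\<lambda>z. {z}) ` U2"
  proof
    show "{K \<in> CS. uh K} \<subseteq> (\<lambda>z. {z}) ` U2"
    proof
      fix K assume K: "K \<in> {K \<in> CS. uh K}"
      then have "card K = 1" using allS by blast
      then obtain z where "z \<in> U2" "K = {z}" using singleton_uh[of K] K by blast
      then show "K \<in> (\<lambda>z. {z}) ` U2" by blast
    qed
    show "(\<lambda>z. {z}) ` U2 \<subseteq> {K \<in> CS. uh K}"
    proof
      fix K assume "K \<in> (\<lambda>z. {z}) ` U2"
      then obtain z where z: "z \<in> U2" "K = {z}" by blast
      show "K \<in> {K \<in> CS. uh K}" using U2_uh[OF z(1)] z(2) by blast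
    qed
  qed
  have "card ((\<lambda>z. {z}) ` U2) = card U2" by (rule card_image) (simp add: inj_on_def)
  then have cU2: "card U2 = card (B \<inter> W)" using eq card_UHC by simp
  have fBW: "finite (B \<inter> W)" using fB by simp
  have "card (B \<inter> W) > 0" using W2ne fBW by (simp add: card_gt_0_iff)
  then have U2ne: "U2 \<noteq> {}" using cU2 by (intro notI) simp
  define N where "N = insert w (B \<inter> W)"
  have NV: "N \<subseteq> V" unfolding N_def using BV w_W UW by blast
  have ZN: "U2 \<inter> N = {}" unfolding N_def using UW(2) w_W by blast
  have nb: "\<forall>f\<in>E. \<forall>z\<in>U2. z \<in> ends f \<longrightarrow> ends f \<subseteq> insert z N"
  proof (intro ballI impI)
    fix f z assume f: "f \<in> E" and z: "z \<in> U2" and zf: "z \<in> ends f"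
    show "ends f \<subseteq> insert z N"
    proof (cases "f = e")
      case True
      then have "z = u" using zf e_ends z w_W UW(2) by blast
      then show ?thesis using True e_ends unfolding N_def by blast
    next
      case ne: False
      have n1: "f \<noteq> e1" using nz z zf by blast
      have n2: "f \<noteq> e2" using zf e2_W z UW(2) by blast
      obtain b where "b \<in> B" "b \<in> W" "ends f = {z, b}" using U2_nb[OF z f ne n1 n2 zf] by blast
      then show ?thesis unfolding N_def by blast
    qed
  qed
  have "card U2 + 2 \<le> card N" by (rule bicrit_count[OF brick U2V U2ne NV ZN nb])
  moreover have "card N \<le> card (B \<inter> W) + 1" unfolding N_def using fBW by (simp add: card_insert_if)
  ultimately show False using cU2 by linarith
qed

lemma e1_ne_empty: "ends e1 \<noteq> {}" using e1_card by auto

lemma P1: assumes K: "K \<in> CS" "ends e1 \<subseteq> K" shows "uh K"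
proof (rule ccontr)
  assume nuh: "\<not> uh K"
  have allS: "\<forall>L\<in>CS. uh L \<longrightarrow> card L = 1"
  proof (intro ballI impI)
    fix L assume L: "L \<in> CS" "uh L"
    have "card L \<noteq> 0" using fK[OF L(1)] comp_ne[OF L(1)] by simp
    moreover have "\<not> card L \<ge> 2"
    proof
      assume "card L \<ge> 2"
      have "ends e1 \<subseteq> L"
      proof (rule ccontr)
        assume "\<not> ends e1 \<subseteq> L"
        then show False using max_U[OF L(1) \<open>card L \<ge> 2\<close>] L(2) by blast
      qed
      obtain x where "x \<in> ends e1" using e1_ne_empty by blast
      then have "L = K" using comp_disj[OF L(1) K(1)] K(2) \<open>ends e1 \<subseteq> L\<close> by blast
      then show False using nuh L(2) by blast
    qed
    ultimately show "card L = 1" by linarith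
  qed
  obtain z where z: "z \<in> U2" "z \<in> ends e1" using C_U[OF allS] by blast
  have "z \<in> K" using z K(2) by blast
  moreover have zC: "{z} \<in> CS" using z(1) by blast
  ultimately have "K = {z}" using comp_disj[OF K(1) zC] by blast
  then have "card (ends e1) \<le> card {z}" using K(2) by (intro card_mono) auto
  then have "card (ends e1) \<le> 1" by simp
  then show False using e1_card by simp
qed


abbreviation "wh K \<equiv> card (K \<inter> W) = card (K \<inter> U) + 1"
abbreviation "W1 \<equiv> {v \<in> W. {v} \<in> CS}"

lemma max_W: assumes "K \<in> CS" "card K \<ge> 2" "wh K \<or> card (K \<inter> U) = card (K \<inter> W)" "\<not> ends e2 \<subseteq> K"
  shows False
  using ctx.max_U[OF swap, of K] assms by auto

lemma P2: assumes "K \<in> CS" "ends e2 \<subseteq> K" shows "wh K"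
  using ctx.P1[OF swap, of K] assms by auto

abbreviation "ex1 \<equiv> \<exists>K\<in>CS. ends e1 \<subseteq> K"
abbreviation "K1 \<equiv> THE K. K \<in> CS \<and> ends e1 \<subseteq> K"

lemma K1_props: assumes ex: ex1
  shows "K1 \<in> CS" "ends e1 \<subseteq> K1" "uh K1" "card K1 \<ge> 2" "\<And>K. K \<in> CS \<Longrightarrow> ends e1 \<subseteq> K \<Longrightarrow> K = K1"
proof -
  obtain K where K: "K \<in> CS" "ends e1 \<subseteq> K" using ex by blast
  obtain x where x: "x \<in> ends e1" using e1_ne_empty by blast
  have uni: "K' = K" if "K' \<in> CS" "ends e1 \<subseteq> K'" for K'
  proof -
    have "x \<in> K'" "x \<in> K" using x that(2) K(2) by auto
    then show ?thesis using comp_disj[OF that(1) K(1)] by blast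
  qed
  have KK: "K1 = K"
  proof (rule the_equality)
    show "K \<in> CS \<and> ends e1 \<subseteq> K" using K by blast
    fix K' assume "K' \<in> CS \<and> ends e1 \<subseteq> K'"
    then show "K' = K" using uni by blast
  qed
  show c: "K1 \<in> CS" using K(1) KK by simp
  show s: "ends e1 \<subseteq> K1" using K(2) KK by simp
  show "\<And>K'. K' \<in> CS \<Longrightarrow> ends e1 \<subseteq> K' \<Longrightarrow> K' = K1" using uni KK by simp
  show "uh K1" using P1[OF c s] .
  have "card (ends e1) \<le> card K1" by (rule card_mono[OF fK[OF c] s])
  then show "card K1 \<ge> 2" using e1_card by simp
qed

lemma uh_cases: assumes K: "K \<in> CS" "uh K" shows "(\<exists>z\<in>U2. K = {z}) \<or> (ex1 \<and> K = K1)"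
proof (cases "card K \<ge> 2")
  case True
  have "ends e1 \<subseteq> K"
  proof (rule ccontr)
    assume "\<not> ends e1 \<subseteq> K"
    then show False using max_U[OF K(1) True] K(2) by blast
  qed
  then have ex: ex1 using K(1) by blast
  then have "K = K1" using K1_props(5)[OF ex K(1) \<open>ends e1 \<subseteq> K\<close>] by blast
  then show ?thesis using ex by blast
next
  case False
  have "card K \<noteq> 0" using fK[OF K(1)] comp_ne[OF K(1)] by simp
  then have "card K = 1" using False by linarith
  then show ?thesis using singleton_uh[OF K] by blast
qed

lemma K1_U2: assumes ex: ex1 shows "K1 \<inter> U2 = {}"
proof (rule ccontr)
  assume "K1 \<inter> U2 \<noteq> {}"
  then obtain z where z: "z \<in> K1" "z \<in> U2" by blast
  have zC: "{z} \<in> CS" using z(2) by blast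
  have "K1 = {z}" using comp_disj[OF K1_props(1)[OF ex] zC] z(1) by blast
  then show False using K1_props(4)[OF ex] by simp
qed

lemma count_W2: "card (B \<inter> W) = card U2 + (if ex1 then 1 else 0)"
proof -
  have eq: "{K \<in> CS. uh K} = (\<lambda>z. {z}) ` U2 \<union> (if ex1 then {K1} else {})"
  proof
    show "{K \<in> CS. uh K} \<subseteq> (\<lambda>z. {z}) ` U2 \<union> (if ex1 then {K1} else {})"
    proof
      fix K assume "K \<in> {K \<in> CS. uh K}"
      then have K: "K \<in> CS" "uh K" by auto
      show "K \<in> (\<lambda>z. {z}) ` U2 \<union> (if ex1 then {K1} else {})" using uh_cases[OF K] by auto
    qed
    show "(\<lambda>z. {z}) ` U2 \<union> (if ex1 then {K1} else {}) \<subseteq> {K \<in> CS. uh K}"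
    proof
      fix K assume K: "K \<in> (\<lambda>z. {z}) ` U2 \<union> (if ex1 then {K1} else {})"
      show "K \<in> {K \<in> CS. uh K}"
      proof (cases "K \<in> (\<lambda>z. {z}) ` U2")
        case True
        then obtain z where z: "z \<in> U2" "K = {z}" by blast
        then show ?thesis using U2_uh[OF z(1)] by blast
      next
        case False
        then have "ex1" "K = K1" using K by (auto split: if_splits)
        then show ?thesis using K1_props(1,3) by blast
      qed
    qed
  qed
  have fU2: "finite U2" using finite_subset[OF U2V fV] .
  have c1: "card ((\<lambda>z. {z}) ` U2) = card U2" by (rule card_image) (simp add: inj_on_def)
  have "card {K \<in> CS. uh K} = card U2 + (if ex1 then 1 else 0)"
  proof (cases ex1)
    case True
    have "K1 \<notin> (\<lambda>z. {z}) ` U2" using K1_props(4)[OF True] by auto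
    then show ?thesis unfolding eq using True c1 fU2 by simp
  next
    case False
    then show ?thesis unfolding eq using c1 by simp
  qed
  then show ?thesis using card_UHC by simp
qed

lemma noex1: assumes "\<not> ex1" shows "\<exists>z\<in>U2. z \<in> ends e1"
proof (rule C_U)
  show "\<forall>K\<in>CS. uh K \<longrightarrow> card K = 1"
  proof (intro ballI impI)
    fix K assume K: "K \<in> CS" "uh K"
    then obtain z where "K = {z}" using uh_cases[OF K] assms by blast
    then show "card K = 1" by simp
  qed
qed

lemma u_loc: "(U2 \<noteq> {} \<longrightarrow> u \<in> U2) \<and> (U2 = {} \<longrightarrow> ex1 \<and> u \<in> K1 \<and> card (B \<inter> W) = 1)"
proof -
  obtain K where K: "K \<in> CS" "uh K" "u \<in> K" using u_in_uh by blast
  show ?thesis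
  proof (cases "\<exists>z\<in>U2. K = {z}")
    case True
    then have "u \<in> U2" using K(3) by auto
    then show ?thesis by blast
  next
    case False
    then have ex: ex1 and KK: "K = K1" using uh_cases[OF K(1,2)] by auto
    have "U2 = {}"
    proof (rule ccontr)
      assume U2ne: "U2 \<noteq> {}"
      have NV: "B \<inter> W \<subseteq> V" using BV by blast
      have ZN: "U2 \<inter> (B \<inter> W) = {}" using UW(2) by blast
      have nb: "\<forall>f\<in>E. \<forall>z\<in>U2. z \<in> ends f \<longrightarrow> ends f \<subseteq> insert z (B \<inter> W)"
      proof (intro ballI impI)
        fix f z assume f: "f \<in> E" and z: "z \<in> U2" and zf: "z \<in> ends f"
        have zK1: "z \<notin> K1" using K1_U2[OF ex] z by blast
        have ne: "f \<noteq> e"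
        proof
          assume "f = e"
          then have "z = u" using zf e_ends z w_W UW(2) by blast
          then show False using zK1 K(3) KK by blast
        qed
        have n1: "f \<noteq> e1" using zf zK1 K1_props(2)[OF ex] by blast
        have n2: "f \<noteq> e2" using zf e2_W z UW(2) by blast
        obtain b where "b \<in> B" "b \<in> W" "ends f = {z, b}" using U2_nb[OF z f ne n1 n2 zf] by blast
        then show "ends f \<subseteq> insert z (B \<inter> W)" by blast
      qed
      have "card U2 + 2 \<le> card (B \<inter> W)" by (rule bicrit_count[OF brick U2V U2ne NV ZN nb])
      then show False using count_W2 ex by simp
    qed
    then have c0: "card U2 = 0" by (metis card.empty)
    have "card (B \<inter> W) = card U2 + 1" using count_W2 ex by simp
    then have "card (B \<inter> W) = 1" using c0 by simp
    then show ?thesis using ex K(3) KK \<open>U2 = {}\<close> by blast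
  qed
qed

lemma e1_edges_in: assumes ex: ex1 shows "edges_in E ends (K1 \<inter> U) = {e1}"
proof
  show "edges_in E ends (K1 \<inter> U) \<subseteq> {e1}"
  proof
    fix f assume "f \<in> edges_in E ends (K1 \<inter> U)"
    then have f: "f \<in> E" "ends f \<subseteq> U" unfolding edges_in_def by auto
    show "f \<in> {e1}"
    proof (rule ccontr)
      assume "f \<notin> {e1}"
      show False
      proof (cases "f = e2")
        case True
        then have "ends e2 \<subseteq> U \<inter> W" using f(2) e2_W by blast
        then show False using UW(2) e2_card by auto
      next
        case False
        then obtain a b where ab: "b \<in> W" "ends f = {a, b}" using Hedge f(1) \<open>f \<notin> {e1}\<close> by blast
        then have "b \<in> ends f" by simp
        then show False using f(2) ab(1) UW(2) by blast
      qed
    qed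
  qed
  show "{e1} \<subseteq> edges_in E ends (K1 \<inter> U)"
    unfolding edges_in_def using e1E K1_props(2)[OF ex] e1_U by blast
qed

lemma e1_between: assumes nex: "\<not> ex1" shows "edges_between E ends (B \<inter> U) U2 = {e1}"
proof
  show "edges_between E ends (B \<inter> U) U2 \<subseteq> {e1}"
  proof
    fix f assume "f \<in> edges_between E ends (B \<inter> U) U2"
    then obtain x y where f: "f \<in> E" "x \<in> U" "y \<in> U" "ends f = {x, y}" unfolding edges_between_def by blast
    show "f \<in> {e1}"
    proof (rule ccontr)
      assume "f \<notin> {e1}"
      show False
      proof (cases "f = e2")
        case True
        then have "x \<in> W" using f(4) e2_W by blast
        then show False using f(2) UW(2) by blast
      next
        case False
        then obtain a b where ab: "b \<in> W" "ends f = {a, b}" using Hedge f(1) \<open>f \<notin> {e1}\<close> by blast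
        then have "b \<in> ends f" by simp
        then have "b = x \<or> b = y" using f(4) by simp
        then show False using f(2,3) ab(1) UW(2) by blast
      qed
    qed
  qed
  obtain z where z: "z \<in> U2" "z \<in> ends e1" using noex1[OF nex] by blast
  obtain z' where z': "z' \<noteq> z" "ends e1 = {z, z'}" using ends2[of ends e1 z, OF e1_card z(2)] by blast
  have z'U: "z' \<in> U" using z' e1_U by blast
  have "z' \<in> B"
  proof (rule ccontr)
    assume "z' \<notin> B"
    have zC: "{z} \<in> CS" using z(1) by blast
    have "e1 \<in> E - {e}" using e1E e1_ne by blast
    then have "z' \<in> {z}" using cl[OF zC _ _ z'(2) \<open>z' \<notin> B\<close>] by blast
    then show False using z'(1) by blast
  qed
  have "ends e1 = {z', z}" using z'(2) by (simp add: insert_commute)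
  then show "{e1} \<subseteq> edges_between E ends (B \<inter> U) U2"
    unfolding edges_between_def using e1E \<open>z' \<in> B\<close> z'U z(1) by blast
qed


abbreviation "ex2 \<equiv> \<exists>K\<in>CS. ends e2 \<subseteq> K"
abbreviation "K2 \<equiv> THE K. K \<in> CS \<and> ends e2 \<subseteq> K"

lemma K2_props: assumes ex: ex2
  shows "K2 \<in> CS" "ends e2 \<subseteq> K2" "wh K2" "card K2 \<ge> 2" "\<And>K. K \<in> CS \<Longrightarrow> ends e2 \<subseteq> K \<Longrightarrow> K = K2"
  using ctx.K1_props(1)[OF swap ex] ctx.K1_props(2)[OF swap ex] ctx.K1_props(3)[OF swap ex]
    ctx.K1_props(4)[OF swap ex] ctx.K1_props(5)[OF swap ex] by blast+

lemma K12_ne: assumes ex1 ex2 shows "K1 \<noteq> K2"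
proof
  assume eq: "K1 = K2"
  have "uh K1" using K1_props(3)[OF assms(1)] .
  moreover have "wh K1" using K2_props(3)[OF assms(2)] eq by simp
  ultimately show False by simp
qed

lemma nt_cls: assumes K: "K \<in> CS" "card K \<ge> 2" shows "(ex1 \<and> K = K1) \<or> (ex2 \<and> K = K2)"
proof -
  have KV: "K \<subseteq> V" using comp_subVB[OF K(1)] by blast
  have cases3: "uh K \<or> wh K \<or> card (K \<inter> U) = card (K \<inter> W)"
  proof (cases "odd (card K)")
    case True
    then obtain v where v: "v \<in> K" "v \<in> U \<longrightarrow> uh K" "v \<in> W \<longrightarrow> wh K" using odd_cls[OF K(1)] by blast
    then have "v \<in> U \<or> v \<in> W" using KV UW by blast
    then show ?thesis using v by blast
  next
    case False
    then show ?thesis using even_bal[OF K(1)] by simp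
  qed
  show ?thesis
  proof (cases "uh K")
    case True
    have "ends e1 \<subseteq> K"
    proof (rule ccontr)
      assume "\<not> ends e1 \<subseteq> K" then show False using max_U[OF K] True by blast
    qed
    then have ex: ex1 using K(1) by blast
    then show ?thesis using K1_props(5)[OF ex K(1) \<open>ends e1 \<subseteq> K\<close>] by blast
  next
    case nuh: False
    show ?thesis
    proof (cases "wh K")
      case True
      have "ends e2 \<subseteq> K"
      proof (rule ccontr)
        assume "\<not> ends e2 \<subseteq> K" then show False using max_W[OF K] True by blast
      qed
      then have ex: ex2 using K(1) by blast
      then show ?thesis using K2_props(5)[OF ex K(1) \<open>ends e2 \<subseteq> K\<close>] by blast
    next
      case False
      then have bal: "card (K \<inter> U) = card (K \<inter> W)" using cases3 nuh by blast
      have "ends e1 \<subseteq> K"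
      proof (rule ccontr)
        assume "\<not> ends e1 \<subseteq> K" then show False using max_U[OF K] bal by blast
      qed
      then have "uh K" using P1[OF K(1)] by blast
      then show ?thesis using nuh by blast
    qed
  qed
qed

lemma NT_eq: "{C \<in> CS. 2 \<le> card C} = (if ex1 then {K1} else {}) \<union> (if ex2 then {K2} else {})"
proof
  show "{C \<in> CS. 2 \<le> card C} \<subseteq> (if ex1 then {K1} else {}) \<union> (if ex2 then {K2} else {})"
  proof
    fix C assume "C \<in> {C \<in> CS. 2 \<le> card C}"
    then have C: "C \<in> CS" "card C \<ge> 2" by auto
    show "C \<in> (if ex1 then {K1} else {}) \<union> (if ex2 then {K2} else {})" using nt_cls[OF C] by auto
  qed
  show "(if ex1 then {K1} else {}) \<union> (if ex2 then {K2} else {}) \<subseteq> {C \<in> CS. 2 \<le> card C}"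
    using K1_props(1,4) K2_props(1,4) by (auto split: if_splits)
qed

lemma count_U1: "card (B \<inter> U) = card W1 + (if ex2 then 1 else 0)"
  using ctx.count_W2[OF swap] by simp

lemma singles_U: "td_singles V E ends e B U = U2"
  unfolding td_singles_def td_comps_def by simp
lemma singles_W: "td_singles V E ends e B W = W1"
  unfolding td_singles_def td_comps_def by simp
lemma NT_td: "td_NT V E ends e B = {C \<in> CS. 2 \<le> card C}"
  unfolding td_NT_def td_comps_def by simp

lemma VG_eq: "td_VG1 V E ends e e1 e2 U W B = (if ex2 then K2 else {})"
  "td_VG2 V E ends e e1 e2 U W B = (if ex1 then K1 else {})"
proof -
  have NT: "td_NT V E ends e B = (if ex1 then {K1} else {}) \<union> (if ex2 then {K2} else {})"
    using NT_td NT_eq by simp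
  have "td_VG1 V E ends e e1 e2 U W B = (if ex2 then K2 else {}) \<and>
        td_VG2 V E ends e e1 e2 U W B = (if ex1 then K1 else {})"
  proof (cases ex1)
    case ex1: True
    show ?thesis
    proof (cases ex2)
      case ex2: True
      have ne: "K1 \<noteq> K2" using K12_ne[OF ex1 ex2] .
      have NT2: "td_NT V E ends e B = {K1, K2}" using NT ex1 ex2 by (simp add: insert_commute)
      have c2: "card (td_NT V E ends e B) = 2" using NT2 ne by simp
      have t1: "(THE C. C \<in> td_NT V E ends e B \<and> ends e2 \<subseteq> C) = K2"
      proof (rule the_equality)
        show "K2 \<in> td_NT V E ends e B \<and> ends e2 \<subseteq> K2" using NT2 K2_props(2)[OF ex2] by simp
        fix C assume C: "C \<in> td_NT V E ends e B \<and> ends e2 \<subseteq> C"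
        then have "C \<in> CS" using NT2 K1_props(1)[OF ex1] K2_props(1)[OF ex2] by auto
        then show "C = K2" using K2_props(5)[OF ex2] C by blast
      qed
      have t2: "(THE C. C \<in> td_NT V E ends e B \<and> ends e1 \<subseteq> C) = K1"
      proof (rule the_equality)
        show "K1 \<in> td_NT V E ends e B \<and> ends e1 \<subseteq> K1" using NT2 K1_props(2)[OF ex1] by simp
        fix C assume C: "C \<in> td_NT V E ends e B \<and> ends e1 \<subseteq> C"
        then have "C \<in> CS" using NT2 K1_props(1)[OF ex1] K2_props(1)[OF ex2] by auto
        then show "C = K1" using K1_props(5)[OF ex1] C by blast
      qed
      show ?thesis unfolding td_VG1_def td_VG2_def Let_def using c2 t1 t2 ex1 ex2 by simp
    next
      case nex2: False
      have NT1: "td_NT V E ends e B = {K1}" using NT ex1 nex2 by simp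
      have cU: "card (B \<inter> U) = card (td_singles V E ends e B W)" using count_U1 nex2 singles_W by simp
      show ?thesis unfolding td_VG1_def td_VG2_def Let_def using NT1 cU ex1 nex2 by simp
    qed
  next
    case nex1: False
    show ?thesis
    proof (cases ex2)
      case ex2: True
      have NT1: "td_NT V E ends e B = {K2}" using NT nex1 ex2 by simp
      have cU: "card (B \<inter> U) \<noteq> card (td_singles V E ends e B W)" using count_U1 ex2 singles_W by simp
      show ?thesis unfolding td_VG1_def td_VG2_def Let_def using NT1 cU nex1 ex2 by simp
    next
      case nex2: False
      have NT0: "td_NT V E ends e B = {}" using NT nex1 nex2 by simp
      show ?thesis unfolding td_VG1_def td_VG2_def Let_def using NT0 nex1 nex2 by simp
    qed
  qed
  then show "td_VG1 V E ends e e1 e2 U W B = (if ex2 then K2 else {})"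
    "td_VG2 V E ends e e1 e2 U W B = (if ex1 then K1 else {})" by auto
qed


lemma eb_sym: "edges_between E ends X Y = edges_between E ends Y X"
  unfolding edges_between_def by (auto simp: insert_commute)

lemma concl:
  "(if td_singles V E ends e B U \<noteq> {} then u \<in> td_singles V E ends e B U
      else u \<in> td_VG2 V E ends e e1 e2 U W B \<inter> U \<and> card (B \<inter> W) = 1)
    \<and> (if td_singles V E ends e B W \<noteq> {} then w \<in> td_singles V E ends e B W
      else w \<in> td_VG1 V E ends e e1 e2 U W B \<inter> W)
    \<and> (if td_VG2 V E ends e e1 e2 U W B \<inter> U \<noteq> {}
       then edges_in E ends (td_VG2 V E ends e e1 e2 U W B \<inter> U) = {e1}
       else edges_between E ends (B \<inter> U) (td_singles V E ends e B U) = {e1})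
    \<and> (if td_VG1 V E ends e e1 e2 U W B \<inter> W \<noteq> {}
       then card (B \<inter> U) = card (td_singles V E ends e B W) + 1
          \<and> edges_in E ends (td_VG1 V E ends e e1 e2 U W B \<inter> W) = {e2}
       else card (B \<inter> U) = card (td_singles V E ends e B W)
          \<and> edges_between E ends (td_singles V E ends e B W) (B \<inter> W) = {e2}
          \<and> td_VG1 V E ends e e1 e2 U W B \<inter> U = {})
    \<and> card (td_singles V E ends e B U \<union> td_VG2 V E ends e e1 e2 U W B \<inter> U)
        = card (B \<inter> W \<union> td_VG2 V E ends e e1 e2 U W B \<inter> W)"
proof -
  have wloc: "(W1 \<noteq> {} \<longrightarrow> w \<in> W1) \<and> (W1 = {} \<longrightarrow> ex2 \<and> w \<in> K2 \<and> card (B \<inter> U) = 1)"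
    using ctx.u_loc[OF swap] .
  have c1: "if U2 \<noteq> {} then u \<in> U2 else u \<in> (if ex1 then K1 else {}) \<inter> U \<and> card (B \<inter> W) = 1"
    using u_loc u_U by auto
  have c2: "if W1 \<noteq> {} then w \<in> W1 else w \<in> (if ex2 then K2 else {}) \<inter> W"
    using wloc w_W by auto
  have K1U: "K1 \<inter> U \<noteq> {}" if ex1 using K1_props(2)[OF that] e1_U e1_ne_empty by blast
  have c3: "if (if ex1 then K1 else {}) \<inter> U \<noteq> {} then edges_in E ends ((if ex1 then K1 else {}) \<inter> U) = {e1}
       else edges_between E ends (B \<inter> U) U2 = {e1}"
  proof (cases ex1)
    case True then show ?thesis using K1U e1_edges_in by simp
  next
    case False then show ?thesis using e1_between by simp
  qed
  have e2ne: "ends e2 \<noteq> {}" using e2_card by auto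
  have K2W: "K2 \<inter> W \<noteq> {}" if ex2 using K2_props(2)[OF that] e2_W e2ne by blast
  have c4: "if (if ex2 then K2 else {}) \<inter> W \<noteq> {}
       then card (B \<inter> U) = card W1 + 1 \<and> edges_in E ends ((if ex2 then K2 else {}) \<inter> W) = {e2}
       else card (B \<inter> U) = card W1 \<and> edges_between E ends W1 (B \<inter> W) = {e2}
          \<and> (if ex2 then K2 else {}) \<inter> U = {}"
  proof (cases ex2)
    case True
    have "edges_in E ends (K2 \<inter> W) = {e2}" using ctx.e1_edges_in[OF swap True] .
    then show ?thesis using K2W[OF True] count_U1 True by simp
  next
    case False
    have "edges_between E ends (B \<inter> W) W1 = {e2}" using ctx.e1_between[OF swap False] .
    then have "edges_between E ends W1 (B \<inter> W) = {e2}" using eb_sym by metis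
    then show ?thesis using count_U1 False by simp
  qed
  have c5: "card (U2 \<union> (if ex1 then K1 else {}) \<inter> U) = card (B \<inter> W \<union> (if ex1 then K1 else {}) \<inter> W)"
  proof (cases ex1)
    case True
    have fU2: "finite U2" using finite_subset[OF U2V fV] .
    have fK1: "finite K1" using fK[OF K1_props(1)[OF True]] .
    have d1: "U2 \<inter> (K1 \<inter> U) = {}" using K1_U2[OF True] by blast
    have d2: "(B \<inter> W) \<inter> (K1 \<inter> W) = {}" using comp_subVB[OF K1_props(1)[OF True]] by blast
    have "card (U2 \<union> K1 \<inter> U) = card U2 + card (K1 \<inter> U)"
      using card_Un_disjoint[of U2 "K1 \<inter> U"] fU2 fK1 d1 by simp
    moreover have "card (B \<inter> W \<union> K1 \<inter> W) = card (B \<inter> W) + card (K1 \<inter> W)"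
      using card_Un_disjoint[of "B \<inter> W" "K1 \<inter> W"] fB fK1 d2 by simp
    moreover have "uh K1" using K1_props(3)[OF True] .
    moreover have "card (B \<inter> W) = card U2 + 1" using count_W2 True by simp
    ultimately show ?thesis using True by simp
  next
    case False
    then show ?thesis using count_W2 by simp
  qed
  show ?thesis unfolding singles_U singles_W VG_eq using c1 c2 c3 c4 c5 by blast
qed

end

theorem mainTheorem11:
  fixes V :: "'v set" and E :: "'e set" and ends :: "'e \<Rightarrow> 'v set"
    and e1 e2 e estar :: 'e and U W B :: "'v set" and u w :: 'v
  assumes brick: "brick V E ends"
    and doubleton: "removable_doubleton V E ends e1 e2"
    and bip_UW: "U \<union> W = V" "U \<inter> W = {}"
      "\<forall>f\<in>E - {e1, e2}. \<exists>x\<in>U. \<exists>y\<in>W. ends f = {x, y}"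
    and e1_U: "ends e1 \<subseteq> U" and e2_W: "ends e2 \<subseteq> W"
    and e_edge: "e \<in> E" "e \<notin> {e1, e2}"
    and e_nonrem_G: "\<not> removable V E ends e"
    and e_nonrem_H: "\<not> removable V (E - {e1, e2}) ends e"
    and e_ends: "ends e = {u, w}" and u_U: "u \<in> U" and w_W: "w \<in> W"
    and estar_edge: "estar \<in> E - {e, e1, e2}"
    and estar_nonadm_Ge: "\<not> admissible V (E - {e}) ends estar"
    and estar_nonadm_He: "\<not> admissible V (E - {e, e1, e2}) ends estar"
    and B_barrier: "barrier V (E - {e}) ends B" and B_estar: "ends estar \<subseteq> B"
    and B_max: "\<forall>B'. barrier V (E - {e}) ends B' \<and> ends estar \<subseteq> B' \<and> B \<subseteq> B' \<longrightarrow> B' = B"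
  defines "U1 \<equiv> B \<inter> U" and "W2 \<equiv> B \<inter> W"
    and "U2 \<equiv> td_singles V E ends e B U" and "W1 \<equiv> td_singles V E ends e B W"
    and "U3 \<equiv> td_VG1 V E ends e e1 e2 U W B \<inter> U" and "W3 \<equiv> td_VG1 V E ends e e1 e2 U W B \<inter> W"
    and "U4 \<equiv> td_VG2 V E ends e e1 e2 U W B \<inter> U" and "W4 \<equiv> td_VG2 V E ends e e1 e2 U W B \<inter> W"
  shows "(if U2 \<noteq> {} then u \<in> U2 else u \<in> U4 \<and> card W2 = 1)
    \<and> (if W1 \<noteq> {} then w \<in> W1 else w \<in> W3)
    \<and> (if U4 \<noteq> {} then edges_in E ends U4 = {e1} else edges_between E ends U1 U2 = {e1})
    \<and> (if W3 \<noteq> {} then card U1 = card W1 + 1 \<and> edges_in E ends W3 = {e2}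
       else card U1 = card W1 \<and> edges_between E ends W1 W2 = {e2} \<and> U3 = {})
    \<and> card (U2 \<union> U4) = card (W2 \<union> W4)"
proof -
  have rd: "e1 \<in> E" "e2 \<in> E" "matching_covered V (E - {e1, e2}) ends"
    using doubleton unfolding removable_doubleton_def by auto
  interpret c: ctx V E ends e1 e2 e estar U W B u w
    apply (rule ctx.intro)
    using brick apply blast
    using rd apply blast
    using rd apply blast
    using rd apply blast
    using bip_UW apply blast
    using bip_UW apply blast
    using bip_UW apply blast
    using e1_U apply blast
    using e2_W apply blast
    using e_edge apply blast
    using e_edge apply blast
    using e_ends apply blast
    using u_U apply blast
    using w_W apply blast
    using estar_edge apply blast
    using B_barrier apply blast
    using B_estar apply blast
    using B_max apply blast
    done
  show ?thesis unfolding U1_def W2_def U2_def W1_def U3_def W3_def U4_def W4_def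
    by (rule c.concl)
qed

end
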